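(* Let $\mathfrak g$ be a simple Lie algebra, $a,b$ coprime with $0<a<b$, and $\lambda\in\Lambda^+$. If $m^0_{\lambda,a}\neq0$, then $0\in S_{\lambda,a}$ and $\mu=0$ is the unique minimizer of $f^*(\mu)=\frac{b}{2a}(\mu,\mu)+(\frac ba-1)(\mu,\rho)-\frac{ab}{2}(\lambda,\lambda)-(ab-1)(\lambda,\rho)$ on $S_{\lambda,a}$.
   Context: $\Lambda^+$ dominant weights, $W$ Weyl group, $\rho$ half the sum of positive roots, $(\cdot,\cdot)$ normalized invariant positive definite inner product, $\Pi_\lambda$ set of weights of $V_\lambda$, $S_{\lambda,a}=[\bigcup_{\sigma\in W}(\sigma(\rho)-\rho+a\Pi_\lambda)]\cap\Lambda^+$. The plethysm multiplicities $m^\mu_{\lambda,a}$ are defined by $\psi_a(\mathrm{ch}_\lambda)=\sum_{\mu\in\Lambda^+}m^\mu_{\lambda,a}\mathrm{ch}_\mu$, with $\mathrm{ch}_\lambda$ the formal character of $V_\lambda$ and $\psi_a(e_\nu)=e_{a\nu}$. *)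

theory Defs
  imports "HOL-Analysis.Analysis"
begin

text \<open>The weight space of a simple Lie algebra is modelled as a Euclidean space
  ''a with its inner product; the Lie algebra enters only through its root system R
  (a finite, reduced, crystallographic, irreducible root system spanning the space)
  together with a choice of positive roots P.\<close>

definition refl :: "'a::euclidean_space \<Rightarrow> 'a \<Rightarrow> 'a" where
  "refl \<alpha> x = x - (2 * (x \<bullet> \<alpha>) / (\<alpha> \<bullet> \<alpha>)) *\<^sub>R \<alpha>"

definition root_system :: "'a::euclidean_space set \<Rightarrow> bool" where
  "root_system R \<longleftrightarrow> finite R \<and> 0 \<notin> R \<and> span R = UNIV
     \<and> (\<forall>\<alpha>\<in>R. \<forall>\<beta>\<in>R. refl \<alpha> \<beta> \<in> R)
     \<and> (\<forall>\<alpha>\<in>R. \<forall>\<beta>\<in>R. 2 * (\<beta> \<bullet> \<alpha>) / (\<alpha> \<bullet> \<alpha>) \<in> \<int>)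
     \<and> (\<forall>\<alpha>\<in>R. \<forall>c::real. c *\<^sub>R \<alpha> \<in> R \<longrightarrow> c = 1 \<or> c = -1)"

definition irreducible_rs :: "'a::euclidean_space set \<Rightarrow> bool" where
  "irreducible_rs R \<longleftrightarrow> \<not> (\<exists>R1 R2. R1 \<noteq> {} \<and> R2 \<noteq> {} \<and> R1 \<union> R2 = R
        \<and> (\<forall>x\<in>R1. \<forall>y\<in>R2. x \<bullet> y = 0))"

text \<open>Normalized invariant form: long roots have squared length 2.\<close>
definition normalized_rs :: "'a::euclidean_space set \<Rightarrow> bool" where
  "normalized_rs R \<longleftrightarrow> (\<forall>\<alpha>\<in>R. \<alpha> \<bullet> \<alpha> \<le> 2) \<and> (\<exists>\<alpha>\<in>R. \<alpha> \<bullet> \<alpha> = 2)"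

definition positive_system :: "'a::euclidean_space set \<Rightarrow> 'a set \<Rightarrow> bool" where
  "positive_system R P \<longleftrightarrow> (\<exists>v. (\<forall>\<alpha>\<in>R. \<alpha> \<bullet> v \<noteq> 0) \<and> P = {\<alpha>\<in>R. \<alpha> \<bullet> v > 0})"

inductive_set weyl_group :: "'a::euclidean_space set \<Rightarrow> ('a \<Rightarrow> 'a) set" for R where
  id_in: "id \<in> weyl_group R"
| step: "w \<in> weyl_group R \<Longrightarrow> \<alpha> \<in> R \<Longrightarrow> refl \<alpha> \<circ> w \<in> weyl_group R"

text \<open>Sign of a Weyl group element: (-1)^(length), length = number of positive roots
  sent to negative roots.\<close>
definition wsign :: "'a::euclidean_space set \<Rightarrow> ('a \<Rightarrow> 'a) \<Rightarrow> int" where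
  "wsign P w = (-1) ^ card {\<alpha>\<in>P. w \<alpha> \<notin> P}"

definition rho :: "'a::euclidean_space set \<Rightarrow> 'a" where
  "rho P = (1/2) *\<^sub>R (\<Sum>\<alpha>\<in>P. \<alpha>)"

definition weight_lattice :: "'a::euclidean_space set \<Rightarrow> 'a set" where
  "weight_lattice R = {\<mu>. \<forall>\<alpha>\<in>R. 2 * (\<mu> \<bullet> \<alpha>) / (\<alpha> \<bullet> \<alpha>) \<in> \<int>}"

definition dominant :: "'a::euclidean_space set \<Rightarrow> 'a set \<Rightarrow> 'a set" where
  "dominant R P = {\<mu>\<in>weight_lattice R. \<forall>\<alpha>\<in>P. \<mu> \<bullet> \<alpha> \<ge> 0}"

text \<open>Formal characters: finitely supported integer functions on the weight space
  (element e_nu is the indicator of nu); multiplication is convolution.\<close>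
definition fsupp :: "('a \<Rightarrow> int) \<Rightarrow> 'a set" where
  "fsupp f = {x. f x \<noteq> 0}"

definition conv :: "('a::ab_group_add \<Rightarrow> int) \<Rightarrow> ('a \<Rightarrow> int) \<Rightarrow> 'a \<Rightarrow> int" where
  "conv f g \<nu> = (\<Sum>\<mu>\<in>fsupp f. f \<mu> * g (\<nu> - \<mu>))"

definition alternant :: "'a::euclidean_space set \<Rightarrow> 'a set \<Rightarrow> 'a \<Rightarrow> 'a \<Rightarrow> int" where
  "alternant R P \<mu> \<nu> = (\<Sum>w\<in>weyl_group R. if w \<mu> = \<nu> then wsign P w else 0)"

text \<open>Formal character ch_lambda of V_lambda, given by the Weyl character formula
  ch_lambda * A_rho = A_(lambda+rho).\<close>
definition ch :: "'a::euclidean_space set \<Rightarrow> 'a set \<Rightarrow> 'a \<Rightarrow> 'a \<Rightarrow> int" where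
  "ch R P lam = (THE f. finite (fsupp f)
      \<and> conv f (alternant R P (rho P)) = alternant R P (lam + rho P))"

definition weights :: "'a::euclidean_space set \<Rightarrow> 'a set \<Rightarrow> 'a \<Rightarrow> 'a set" where
  "weights R P lam = fsupp (ch R P lam)"

text \<open>Adams operation psi_a(e_nu) = e_(a nu), extended linearly.\<close>
definition adams :: "nat \<Rightarrow> ('a::real_vector \<Rightarrow> int) \<Rightarrow> 'a \<Rightarrow> int" where
  "adams a f \<nu> = f ((1 / real a) *\<^sub>R \<nu>)"

definition pleth_mult :: "'a::euclidean_space set \<Rightarrow> 'a set \<Rightarrow> 'a \<Rightarrow> nat \<Rightarrow> 'a \<Rightarrow> int" where
  "pleth_mult R P lam a = (THE m. finite (fsupp m) \<and> fsupp m \<subseteq> dominant R P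
      \<and> adams a (ch R P lam) = (\<lambda>\<nu>. \<Sum>\<mu>\<in>fsupp m. m \<mu> * ch R P \<mu> \<nu>))"

definition S_set :: "'a::euclidean_space set \<Rightarrow> 'a set \<Rightarrow> 'a \<Rightarrow> nat \<Rightarrow> 'a set" where
  "S_set R P lam a = (\<Union>\<sigma>\<in>weyl_group R.
      (\<lambda>\<pi>. \<sigma> (rho P) - rho P + real a *\<^sub>R \<pi>) ` weights R P lam) \<inter> dominant R P"

definition fstar :: "'a::euclidean_space set \<Rightarrow> nat \<Rightarrow> nat \<Rightarrow> 'a \<Rightarrow> 'a \<Rightarrow> real" where
  "fstar P a b lam \<mu> = real b / (2 * real a) * (\<mu> \<bullet> \<mu>)
      + (real b / real a - 1) * (\<mu> \<bullet> rho P)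
      - real a * real b / 2 * (lam \<bullet> lam)
      - (real a * real b - 1) * (lam \<bullet> rho P)"

end

theory Submission
  imports Defs "HOL-Library.Poly_Mapping"
begin


lemma refl_linear: "linear (refl a)"
  unfolding refl_def
  by (rule linearI) (simp_all add: inner_add_left algebra_simps add_divide_distrib scaleR_add_left[symmetric]
       scaleR_diff_left[symmetric] divide_simps)

lemma refl_add: "refl a (x + y) = refl a x + refl a y"
  using refl_linear linear_add by blast

lemma refl_scale: "refl a (c *\<^sub>R x) = c *\<^sub>R refl a x"
  using refl_linear linear_scale by blast

lemma refl_neg_arg: "refl a (- x) = - refl a x"
  using refl_linear linear_neg by blast

lemma refl_diff: "refl a (x - y) = refl a x - refl a y"
  using refl_linear linear_diff by blast

lemma refl_self: "a \<noteq> 0 \<Longrightarrow> refl a a = - a"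
  unfolding refl_def by (simp add: scaleR_2 )

lemma refl_inner: "a \<noteq> 0 \<Longrightarrow> refl a x \<bullet> refl a y = x \<bullet> y"
  unfolding refl_def
  by (simp add: inner_diff_left inner_diff_right algebra_simps inner_commute power2_eq_square divide_simps)

lemma refl_refl: "a \<noteq> 0 \<Longrightarrow> refl a (refl a x) = x"
proof -
  assume a: "a \<noteq> 0"
  have "refl a (refl a x) = refl a x - (2 * (x \<bullet> a) / (a \<bullet> a)) *\<^sub>R refl a a"
    by (simp add: refl_def[of a x] refl_diff refl_scale)
  also have "\<dots> = x" using a by (simp add: refl_self) (simp add: refl_def)
  finally show ?thesis .
qed

lemma refl_uminus: "refl (- a) = refl a"
  by (rule ext) (simp add: refl_def)

lemma refl_scaleR_root: "c \<noteq> 0 \<Longrightarrow> refl (c *\<^sub>R a) = refl a"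
  by (rule ext) (simp add: refl_def divide_simps power2_eq_square algebra_simps)

lemma refl_inner_a: "refl a x \<bullet> a = - (x \<bullet> a)"
  by (cases "a = 0") (simp_all add: refl_def inner_diff_left)

lemma refl_conj:
  assumes lin: "linear u" and orth: "\<And>x y. u x \<bullet> u y = x \<bullet> y"
  shows "refl (u a) (u x) = u (refl a x)"
  by (simp add: refl_def orth linear_diff[OF lin] linear_scale[OF lin])

lemma refl_fix_iff: "a \<noteq> 0 \<Longrightarrow> refl a x = x \<longleftrightarrow> x \<bullet> a = 0"
  by (simp add: refl_def)



lemma even_card_involution:
  assumes "finite N" "\<And>x. x \<in> N \<Longrightarrow> f x \<in> N" "\<And>x. x \<in> N \<Longrightarrow> f (f x) = x"
    "\<And>x. x \<in> N \<Longrightarrow> f x \<noteq> x"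
  shows "even (card N)"
  using assms
proof (induction "card N" arbitrary: N rule: less_induct)
  case less
  show ?case
  proof (cases "N = {}")
    case True then show ?thesis by simp
  next
    case False
    then obtain x where x: "x \<in> N" by blast
    let ?M = "N - {x, f x}"
    have fx: "f x \<in> N" "f x \<noteq> x" using less.prems x by auto
    have sub: "{x, f x} \<subseteq> N" using fx x by auto
    have c2: "card {x, f x} = 2" using fx by simp
    have "card {x, f x} \<le> card N" by (rule card_mono[OF less.prems(1) sub])
    then have cM: "card ?M + 2 = card N"
      using card_Diff_subset[OF _ sub] less.prems(1) c2 by (simp add: finite_subset[OF sub])
    have "even (card ?M)"
    proof (rule less.hyps)
      show "card ?M < card N" using cM by simp
      show "finite ?M" using less.prems by simp
      fix y assume y: "y \<in> ?M"
      have yN: "y \<in> N" "y \<noteq> x" "y \<noteq> f x" using y by auto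
      have n1: "f y \<noteq> x"
      proof
        assume "f y = x" then have "f (f y) = f x" by simp
        then show False using less.prems(3)[OF yN(1)] yN(3) by simp
      qed
      have n2: "f y \<noteq> f x"
      proof
        assume "f y = f x" then have "f (f y) = f (f x)" by simp
        then show False using less.prems(3)[OF yN(1)] less.prems(3)[OF x] yN(2) by simp
      qed
      show "f y \<in> ?M" using less.prems(2)[OF yN(1)] n1 n2 by simp
      show "f (f y) = y" using y less.prems by auto
      show "f y \<noteq> y" using y less.prems by auto
    qed
    then show ?thesis using cM by (metis even_add even_numeral)
  qed
qed

locale RS =
  fixes R :: "'a::euclidean_space set" and P :: "'a set" and v :: 'a
  assumes rs: "root_system R" and vreg: "\<And>\<alpha>. \<alpha> \<in> R \<Longrightarrow> \<alpha> \<bullet> v \<noteq> 0"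
    and Pdef: "P = {\<alpha>\<in>R. \<alpha> \<bullet> v > 0}"
begin

abbreviation W where "W \<equiv> weyl_group R"

lemma finR: "finite R" using rs unfolding root_system_def by auto
lemma R_nz: "\<alpha> \<in> R \<Longrightarrow> \<alpha> \<noteq> 0" using rs unfolding root_system_def by auto
lemma spanR: "span R = UNIV" using rs unfolding root_system_def by auto
lemma refl_R: "\<alpha> \<in> R \<Longrightarrow> \<beta> \<in> R \<Longrightarrow> refl \<alpha> \<beta> \<in> R" using rs unfolding root_system_def by auto
lemma int_R: "\<alpha> \<in> R \<Longrightarrow> \<beta> \<in> R \<Longrightarrow> 2 * (\<beta> \<bullet> \<alpha>) / (\<alpha> \<bullet> \<alpha>) \<in> \<int>"
  using rs unfolding root_system_def by auto
lemma reduced: "\<alpha> \<in> R \<Longrightarrow> c *\<^sub>R \<alpha> \<in> R \<Longrightarrow> c = 1 \<or> c = -1"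
  using rs unfolding root_system_def by auto
lemma neg_R: "\<alpha> \<in> R \<Longrightarrow> - \<alpha> \<in> R"
proof -
  assume a: "\<alpha> \<in> R"
  have "refl \<alpha> \<alpha> = - \<alpha>" by (rule refl_self[OF R_nz[OF a]])
  then show ?thesis using refl_R[OF a a] by simp
qed

lemma P_R: "\<alpha> \<in> P \<Longrightarrow> \<alpha> \<in> R" using Pdef by auto
lemma finP: "finite P" using finR Pdef by auto
lemma P_pos: "\<alpha> \<in> P \<Longrightarrow> \<alpha> \<bullet> v > 0" using Pdef by auto
lemma P_or: "\<alpha> \<in> R \<Longrightarrow> \<alpha> \<notin> P \<Longrightarrow> - \<alpha> \<in> P"
  using Pdef vreg neg_R by (auto simp: inner_minus_left)
lemma P_neg: "\<alpha> \<in> P \<Longrightarrow> - \<alpha> \<notin> P"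
  using Pdef by (auto simp: inner_minus_left)
lemma P_nz: "\<alpha> \<in> P \<Longrightarrow> \<alpha> \<noteq> 0" using P_R R_nz by auto
lemma P_sq: "\<alpha> \<in> P \<Longrightarrow> \<alpha> \<bullet> \<alpha> > 0" using P_nz by auto

lemma W_refl: "\<alpha> \<in> R \<Longrightarrow> refl \<alpha> \<in> W"
  using weyl_group.step[OF weyl_group.id_in] by (metis comp_id)

lemma W_comp: "w \<in> W \<Longrightarrow> u \<in> W \<Longrightarrow> w \<circ> u \<in> W"
  by (induction rule: weyl_group.induct) (auto simp: comp_assoc intro: weyl_group.step)

lemma W_lin: "w \<in> W \<Longrightarrow> linear w"
proof (induction rule: weyl_group.induct)
  case id_in show ?case unfolding id_def by (rule linear_ident)
next
  case (step w \<alpha>) show ?case by (rule linear_compose[OF step.IH refl_linear])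
qed

lemma W_orth: "w \<in> W \<Longrightarrow> w x \<bullet> w y = x \<bullet> y"
  by (induction arbitrary: x y rule: weyl_group.induct) (auto simp: refl_inner R_nz)

lemma W_R: "w \<in> W \<Longrightarrow> \<alpha> \<in> R \<Longrightarrow> w \<alpha> \<in> R"
  by (induction arbitrary: \<alpha> rule: weyl_group.induct) (auto simp: refl_R)

lemma W_inj: "w \<in> W \<Longrightarrow> inj w"
proof (rule injI)
  fix x y assume w: "w \<in> W" and "w x = w y"
  then have "w (x - y) = 0" using W_lin[OF w] by (simp add: linear_diff)
  then have "(x - y) \<bullet> (x - y) = 0" using W_orth[OF w, of "x - y" "x - y"] by simp
  then show "x = y" by simp
qed

lemma W_inv_ex: "w \<in> W \<Longrightarrow> \<exists>u\<in>W. u \<circ> w = id \<and> w \<circ> u = id"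
proof (induction rule: weyl_group.induct)
  case id_in
  have "id \<circ> id = (id :: 'a \<Rightarrow> 'a)" by simp
  then show ?case using weyl_group.id_in by blast
next
  case (step w \<alpha>)
  then obtain u where u: "u \<in> W" "u \<circ> w = id" "w \<circ> u = id" by blast
  have rr: "refl \<alpha> \<circ> refl \<alpha> = id" using refl_refl R_nz step by (auto simp: fun_eq_iff)
  have "u \<circ> refl \<alpha> \<in> W" using W_comp[OF u(1) W_refl[OF step(2)]] .
  moreover have "(u \<circ> refl \<alpha>) \<circ> (refl \<alpha> \<circ> w) = id"
    by (metis (no_types, lifting) comp_assoc comp_id rr u(2))
  moreover have "(refl \<alpha> \<circ> w) \<circ> (u \<circ> refl \<alpha>) = id"
    by (metis (no_types, lifting) comp_assoc comp_id rr u(3))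
  ultimately show ?case by blast
qed

lemma W_inv: "w \<in> W \<Longrightarrow> inv w \<in> W \<and> inv w \<circ> w = id \<and> w \<circ> inv w = id"
  using W_inv_ex by (metis inv_unique_comp)

lemma W_inv_in: "w \<in> W \<Longrightarrow> inv w \<in> W" using W_inv by blast
lemma W_inv_l [simp]: "w \<in> W \<Longrightarrow> inv w (w x) = x" using W_inv by (metis comp_apply id_apply)
lemma W_inv_r [simp]: "w \<in> W \<Longrightarrow> w (inv w x) = x" using W_inv by (metis comp_apply id_apply)

lemma W_surj: assumes w: "w \<in> W" shows "surj w"
  unfolding surj_def
proof
  fix y show "\<exists>x. y = w x" by (rule exI[of _ "inv w y"]) (simp add: w)
qed

lemma W_bij: assumes w: "w \<in> W" shows "bij w"
  unfolding bij_def using W_inj[OF w] W_surj[OF w] by (rule conjI)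

lemma W_RR: assumes w: "w \<in> W" shows "w ` R = R"
proof -
  have sub: "w ` R \<subseteq> R" using W_R[OF w] by (simp add: image_subset_iff)
  show ?thesis by (rule endo_inj_surj[OF finR sub inj_on_subset[OF W_inj[OF w] subset_UNIV]])
qed

lemma W_add: "w \<in> W \<Longrightarrow> w (x + y) = w x + w y" using W_lin linear_add by blast
lemma W_diff: "w \<in> W \<Longrightarrow> w (x - y) = w x - w y" using W_lin linear_diff by blast
lemma W_neg: "w \<in> W \<Longrightarrow> w (- x) = - w x" using W_lin linear_neg by blast
lemma W_scale: "w \<in> W \<Longrightarrow> w (c *\<^sub>R x) = c *\<^sub>R w x" using W_lin linear_scale by blast
lemma W_zero: "w \<in> W \<Longrightarrow> w 0 = 0" using W_lin linear_0 by blast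
lemma W_sum: "w \<in> W \<Longrightarrow> w (sum f A) = (\<Sum>x\<in>A. w (f x))" using W_lin linear_sum by blast

lemma W_finite: "finite W"
proof -
  have "inj_on (\<lambda>w. restrict w R) W"
  proof (rule inj_onI)
    fix w u assume w: "w \<in> W" and u: "u \<in> W" and eq: "restrict w R = restrict u R"
    have "w x = u x" for x
    proof (rule linear_eq_on_span[OF W_lin[OF w] W_lin[OF u]])
      show "x \<in> span R" using spanR by simp
      fix b assume "b \<in> R" then show "w b = u b" using eq by (metis restrict_apply')
    qed
    then show "w = u" by auto
  qed
  moreover have "(\<lambda>w. restrict w R) ` W \<subseteq> (\<Pi>\<^sub>E i\<in>R. R)"
    using W_R by auto
  moreover have "finite (\<Pi>\<^sub>E i\<in>R. R)" using finR by (simp add: finite_PiE)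
  ultimately show ?thesis by (meson finite_imageD finite_subset)
qed

lemma W_refl_conj: "w \<in> W \<Longrightarrow> refl (w \<alpha>) \<circ> w = w \<circ> refl \<alpha>"
  by (auto simp: fun_eq_iff refl_conj W_lin W_orth)


end

context RS begin

definition pos :: "'a \<Rightarrow> 'a" where "pos a = (if a \<in> P then a else - a)"

lemma pos_P: "a \<in> R \<Longrightarrow> pos a \<in> P" using P_or by (auto simp: pos_def)

lemma wsign_prod: "wsign P w = (\<Prod>\<alpha>\<in>P. if w \<alpha> \<in> P then 1 else -1)"
proof -
  have "(\<Prod>\<alpha>\<in>P. if w \<alpha> \<in> P then 1 else (-1::int)) =
     (\<Prod>\<alpha>\<in>P \<inter> {x. w x \<in> P}. 1) * (\<Prod>\<alpha>\<in>P \<inter> - {x. w x \<in> P}. -1)"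
    by (rule prod.If_cases[OF finP])
  also have "\<dots> = (-1) ^ card (P \<inter> - {x. w x \<in> P})" by simp
  also have "P \<inter> - {x. w x \<in> P} = {\<alpha>\<in>P. w \<alpha> \<notin> P}" by auto
  finally show ?thesis unfolding wsign_def by simp
qed

lemma neg_swap: "- a = (b::'a) \<Longrightarrow> a = - b" by auto

lemma pos_bij: "w \<in> W \<Longrightarrow> bij_betw (\<lambda>\<alpha>. pos (w \<alpha>)) P P"
proof -
  assume w: "w \<in> W"
  have inj: "inj_on (\<lambda>\<alpha>. pos (w \<alpha>)) P"
  proof (rule inj_onI)
    fix a b assume a: "a \<in> P" and b: "b \<in> P" and e: "pos (w a) = pos (w b)"
    then have "w a = w b \<or> w a = - w b" by (auto simp: pos_def split: if_splits dest: neg_swap)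
    then have "a = b \<or> a = - b" using W_inj[OF w] W_neg[OF w] by (metis injD)
    then show "a = b" using a b P_neg by auto
  qed
  moreover have "(\<lambda>\<alpha>. pos (w \<alpha>)) ` P \<subseteq> P" using pos_P W_R[OF w] P_R by auto
  ultimately show ?thesis using endo_inj_surj[OF finP] by (simp add: bij_betw_def)
qed

lemma wsign_mult: assumes w: "w \<in> W" and u: "u \<in> W"
  shows "wsign P (w \<circ> u) = wsign P w * wsign P u"
proof -
  have e: "(if (w \<circ> u) \<alpha> \<in> P then 1 else -1::int) =
      (if w (pos (u \<alpha>)) \<in> P then 1 else -1) * (if u \<alpha> \<in> P then 1 else -1)" if a: "\<alpha> \<in> P" for \<alpha>
  proof (cases "u \<alpha> \<in> P")
    case True then show ?thesis by (simp add: pos_def)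
  next
    case False
    have uR: "u \<alpha> \<in> R" using W_R[OF u P_R[OF a]] .
    have wR: "w (- u \<alpha>) \<in> R" using W_R[OF w neg_R[OF uR]] .
    have "w (u \<alpha>) \<in> P \<longleftrightarrow> w (- u \<alpha>) \<notin> P"
      using P_or[OF wR] P_neg W_neg[OF w] by (metis minus_minus)
    then show ?thesis using False by (simp add: pos_def)
  qed
  have "wsign P (w \<circ> u) = (\<Prod>\<alpha>\<in>P. (if w (pos (u \<alpha>)) \<in> P then 1 else -1) * (if u \<alpha> \<in> P then 1 else -1))"
    unfolding wsign_prod using e by (intro prod.cong) auto
  also have "\<dots> = (\<Prod>\<alpha>\<in>P. (if w (pos (u \<alpha>)) \<in> P then 1 else -1)) * wsign P u"
    by (simp add: prod.distrib wsign_prod)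
  also have "(\<Prod>\<alpha>\<in>P. (if w (pos (u \<alpha>)) \<in> P then 1 else -1::int)) = wsign P w"
    unfolding wsign_prod
    using prod.reindex_bij_betw[OF pos_bij[OF u], of "\<lambda>\<beta>. if w \<beta> \<in> P then 1 else -1"] by simp
  finally show ?thesis .
qed

lemma wsign_pm: "wsign P w = 1 \<or> wsign P w = -1"
  unfolding wsign_def by (simp add: minus_one_power_iff)

lemma wsign_id: "wsign P id = 1" unfolding wsign_def by simp

lemma wsign_inv: assumes w: "w \<in> W" shows "wsign P (inv w) = wsign P w"
proof -
  have "wsign P (inv w) * wsign P w = 1"
    using wsign_mult[OF W_inv_in[OF w] w] W_inv[OF w] wsign_id by simp
  then show ?thesis using wsign_pm[of w] wsign_pm[of "inv w"] by auto
qed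

lemma wsign_refl: assumes a: "\<alpha> \<in> R" shows "wsign P (refl \<alpha>) = -1"
proof -
  let ?N = "{\<beta>\<in>P. refl \<alpha> \<beta> \<notin> P}"
  let ?f = "\<lambda>\<beta>. - refl \<alpha> \<beta>"
  have a0: "\<alpha> \<noteq> 0" using R_nz a by auto
  have pa: "pos \<alpha> \<in> ?N"
    using pos_P[OF a] refl_self[OF a0] refl_uminus[of \<alpha>] P_neg
    by (auto simp: pos_def refl_neg_arg split: if_splits)
  let ?M = "?N - {pos \<alpha>}"
  have "even (card ?M)"
  proof (rule even_card_involution)
    show "finite ?M" using finP by simp
    fix x assume x: "x \<in> ?M"
    have xR: "x \<in> R" using x P_R by auto
    have rx: "refl \<alpha> x \<in> R" using refl_R[OF a xR] .
    have fP: "?f x \<in> P" using P_or[OF rx] x by auto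
    have ffx: "?f (?f x) = x" using refl_refl[OF a0] by (simp add: refl_neg_arg)
    show "?f (?f x) = x" by fact
    have fN: "refl \<alpha> (?f x) \<notin> P" using ffx x P_neg by (simp add: refl_neg_arg)
    show "?f x \<noteq> x"
    proof
      assume "?f x = x"
      then have "refl \<alpha> x = - x" by (metis minus_minus)
      define c where "c = 2 * (x \<bullet> \<alpha>) / (\<alpha> \<bullet> \<alpha>)"
      then have e: "x - c *\<^sub>R \<alpha> = - x" using \<open>refl \<alpha> x = - x\<close> by (simp add: refl_def)
      have "c *\<^sub>R \<alpha> = x - (x - c *\<^sub>R \<alpha>)" by simp
      also have "\<dots> = x + x" using e by simp
      finally have e2: "c *\<^sub>R \<alpha> = x + x" .
      have "(c / 2) *\<^sub>R \<alpha> = (1/2) *\<^sub>R (c *\<^sub>R \<alpha>)" by simp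
      also have "\<dots> = x" unfolding e2 by (simp add: scaleR_2[symmetric])
      finally have xc: "(c / 2) *\<^sub>R \<alpha> = x" .
      define t where "t = c / 2"
      have xt: "x = t *\<^sub>R \<alpha>" unfolding t_def using xc by simp
      then have "t = 1 \<or> t = -1" using reduced[OF a] xR by metis
      then have "x = \<alpha> \<or> x = - \<alpha>" using xt by auto
      then show False using x by (auto simp: pos_def split: if_splits dest: P_neg)
    qed
    show "?f x \<in> ?M"
    proof -
      have "?f x \<noteq> pos \<alpha>"
      proof
        assume "?f x = pos \<alpha>"
        then have "x = ?f (pos \<alpha>)" using ffx by metis
        also have "?f (pos \<alpha>) = pos \<alpha>"
          using refl_self[OF a0] refl_uminus by (simp add: pos_def refl_neg_arg)
        finally show False using x by simp
      qed
      then show ?thesis using fP fN by simp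
    qed
  qed
  moreover have "card ?N = card ?M + 1"
    using card_Suc_Diff1[OF _ pa] finP by simp
  ultimately have "odd (card ?N)" by simp
  then show ?thesis unfolding wsign_def by simp
qed

end

context RS begin

section \<open>Cones and simple roots\<close>

definition cone :: "'a set \<Rightarrow> 'a set" where
  "cone S = {x. \<exists>c. (\<forall>\<delta>\<in>S. c \<delta> \<ge> 0) \<and> x = (\<Sum>\<delta>\<in>S. c \<delta> *\<^sub>R \<delta>)}"

lemma cone_intro: "(\<And>\<delta>. \<delta> \<in> S \<Longrightarrow> c \<delta> \<ge> 0) \<Longrightarrow> (\<Sum>\<delta>\<in>S. c \<delta> *\<^sub>R \<delta>) \<in> cone S"
  unfolding cone_def by blast

lemma cone_0: "0 \<in> cone S"
  using cone_intro[of S "\<lambda>_. 0"] by simp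

lemma cone_add: assumes "x \<in> cone S" "y \<in> cone S" shows "x + y \<in> cone S"
proof -
  obtain c where c: "\<forall>\<delta>\<in>S. c \<delta> \<ge> 0" "x = (\<Sum>\<delta>\<in>S. c \<delta> *\<^sub>R \<delta>)" using assms(1) unfolding cone_def by blast
  obtain d where d: "\<forall>\<delta>\<in>S. d \<delta> \<ge> 0" "y = (\<Sum>\<delta>\<in>S. d \<delta> *\<^sub>R \<delta>)" using assms(2) unfolding cone_def by blast
  have "x + y = (\<Sum>\<delta>\<in>S. (c \<delta> + d \<delta>) *\<^sub>R \<delta>)"
    unfolding c d by (simp add: sum.distrib scaleR_add_left)
  then show ?thesis using cone_intro[of S "\<lambda>\<delta>. c \<delta> + d \<delta>"] c d by simp
qed

lemma cone_scale: assumes "t \<ge> 0" "x \<in> cone S" shows "t *\<^sub>R x \<in> cone S"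
proof -
  obtain c where c: "\<forall>\<delta>\<in>S. c \<delta> \<ge> 0" "x = (\<Sum>\<delta>\<in>S. c \<delta> *\<^sub>R \<delta>)" using assms(2) unfolding cone_def by blast
  have "t *\<^sub>R x = (\<Sum>\<delta>\<in>S. (t * c \<delta>) *\<^sub>R \<delta>)"
    unfolding c by (simp add: scaleR_sum_right)
  then show ?thesis using cone_intro[of S "\<lambda>\<delta>. t * c \<delta>"] c assms(1) by simp
qed

lemma cone_mem: assumes "finite S" "\<delta> \<in> S" shows "\<delta> \<in> cone S"
proof -
  have "(\<Sum>d\<in>S. (if d = \<delta> then 1 else 0) *\<^sub>R d) = (\<Sum>d\<in>S. if d = \<delta> then d else 0)"
    by (rule sum.cong) auto
  also have "\<dots> = \<delta>" using assms by simp
  finally show ?thesis using cone_intro[of S "\<lambda>d. if d = \<delta> then 1 else 0"] by simp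
qed

lemma cone_sum: assumes "finite A" "\<And>a. a \<in> A \<Longrightarrow> f a \<in> cone S" shows "sum f A \<in> cone S"
  using assms by (induction A rule: finite_induct) (auto intro: cone_0 cone_add)

lemma cone_trans: assumes "finite S" "S \<subseteq> cone T" shows "cone S \<subseteq> cone T"
proof
  fix x assume "x \<in> cone S"
  then obtain c where c: "\<forall>\<delta>\<in>S. c \<delta> \<ge> 0" "x = (\<Sum>\<delta>\<in>S. c \<delta> *\<^sub>R \<delta>)" unfolding cone_def by blast
  show "x \<in> cone T" unfolding c(2)
    by (rule cone_sum[OF assms(1)]) (use c assms in \<open>auto intro: cone_scale\<close>)
qed

lemma cone_v: assumes "S \<subseteq> P" "x \<in> cone S" shows "x \<bullet> v \<ge> 0"
proof -
  obtain c where c: "\<forall>\<delta>\<in>S. c \<delta> \<ge> 0" "x = (\<Sum>\<delta>\<in>S. c \<delta> *\<^sub>R \<delta>)" using assms(2) unfolding cone_def by blast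
  have "x \<bullet> v = (\<Sum>\<delta>\<in>S. c \<delta> * (\<delta> \<bullet> v))" unfolding c(2) by (simp add: inner_sum_left)
  also have "\<dots> \<ge> 0"
  proof (intro sum_nonneg mult_nonneg_nonneg)
    fix x assume x: "x \<in> S"
    show "0 \<le> c x" using c x by auto
    show "0 \<le> x \<bullet> v" using P_pos[of x] assms(1) x by auto
  qed
  finally show ?thesis .
qed

definition good :: "'a set \<Rightarrow> bool" where "good D \<longleftrightarrow> D \<subseteq> P \<and> P \<subseteq> cone D"

definition simple :: "'a set" where "simple = arg_min card good"

lemma good_P: "good P" unfolding good_def using cone_mem[OF finP] by auto

lemma simple_good: "good simple" and simple_min: "good D \<Longrightarrow> card simple \<le> card D"
  using arg_min_nat_lemma[of good P card, OF good_P] unfolding simple_def by auto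

lemma S_P: "simple \<subseteq> P" using simple_good good_def by auto
lemma finS: "finite simple" using S_P finP finite_subset by auto
lemma P_cone: "\<alpha> \<in> P \<Longrightarrow> \<alpha> \<in> cone simple" using simple_good good_def by auto
lemma S_R: "\<alpha> \<in> simple \<Longrightarrow> \<alpha> \<in> R" using S_P P_R by auto

lemma P_coeffs: assumes "\<alpha> \<in> P"
  obtains c where "\<And>\<delta>. \<delta> \<in> simple \<Longrightarrow> c \<delta> \<ge> 0" "\<alpha> = (\<Sum>\<delta>\<in>simple. c \<delta> *\<^sub>R \<delta>)"
  using P_cone[OF assms] unfolding cone_def by blast

lemma S_not_redundant: assumes b: "\<beta> \<in> simple" and c: "\<beta> \<in> cone (simple - {\<beta>})" shows False
proof -
  have "simple \<subseteq> cone (simple - {\<beta>})"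
  proof
    fix \<delta> assume d: "\<delta> \<in> simple"
    show "\<delta> \<in> cone (simple - {\<beta>})"
    proof (cases "\<delta> = \<beta>")
      case True then show ?thesis using c by simp
    next
      case False then show ?thesis using d finS by (intro cone_mem) auto
    qed
  qed
  then have "cone simple \<subseteq> cone (simple - {\<beta>})" using cone_trans finS by blast
  then have "good (simple - {\<beta>})" using simple_good unfolding good_def by auto
  then have "card simple \<le> card (simple - {\<beta>})" by (rule simple_min)
  moreover have "card (simple - {\<beta>}) < card simple" using finS b by (rule card_Diff1_less)
  ultimately show False by simp
qed

lemma S_key: assumes b: "\<beta> \<in> simple" and y: "y \<in> cone (simple - {\<beta>})" "y \<bullet> v > 0"
  and t: "t *\<^sub>R \<beta> = y" shows False
proof (cases "t \<le> 0")
  case True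
  have "y \<bullet> v = t * (\<beta> \<bullet> v)" using t by auto
  also have "\<dots> \<le> 0" using True P_pos S_P b by (simp add: mult_nonpos_nonneg less_imp_le subset_iff)
  finally show False using y by simp
next
  case False
  then have "\<beta> = (1 / t) *\<^sub>R y" using t by auto
  also have "\<dots> \<in> cone (simple - {\<beta>})" using False y by (intro cone_scale) auto
  finally show False using S_not_redundant b by blast
qed

lemma sum_in_cone_v:
  assumes "\<And>\<delta>. \<delta> \<in> A \<Longrightarrow> c \<delta> \<ge> 0" "A \<subseteq> P"
  shows "(\<Sum>\<delta>\<in>A. c \<delta> *\<^sub>R \<delta>) \<bullet> v \<ge> 0"
  using cone_v[OF assms(2) cone_intro[of A c]] assms by blast

lemma S_obtuse: assumes a: "\<alpha> \<in> simple" and b: "\<beta> \<in> simple" and ne: "\<alpha> \<noteq> \<beta>"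
  shows "\<alpha> \<bullet> \<beta> \<le> 0"
proof (rule ccontr)
  assume "\<not> \<alpha> \<bullet> \<beta> \<le> 0"
  then have ab: "\<alpha> \<bullet> \<beta> > 0" by simp
  have aP: "\<alpha> \<in> P" and bP: "\<beta> \<in> P" using a b S_P by auto
  have aR: "\<alpha> \<in> R" and bR: "\<beta> \<in> R" using aP bP P_R by auto
  define k where "k = 2 * (\<beta> \<bullet> \<alpha>) / (\<alpha> \<bullet> \<alpha>)"
  have k: "k > 0" unfolding k_def using ab P_sq[OF aP] by (simp add: inner_commute)
  have \<gamma>: "refl \<alpha> \<beta> = \<beta> - k *\<^sub>R \<alpha>" unfolding refl_def k_def ..
  have \<gamma>R: "refl \<alpha> \<beta> \<in> R" using refl_R[OF aR bR] .
  have av: "\<alpha> \<bullet> v > 0" "\<beta> \<bullet> v > 0" using P_pos aP bP by auto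
  show False
  proof (cases "refl \<alpha> \<beta> \<in> P")
    case True
    obtain c where c: "\<And>\<delta>. \<delta> \<in> simple \<Longrightarrow> c \<delta> \<ge> 0" "refl \<alpha> \<beta> = (\<Sum>\<delta>\<in>simple. c \<delta> *\<^sub>R \<delta>)"
      using P_cone[OF True] unfolding cone_def by blast
    have split: "(\<Sum>\<delta>\<in>simple. c \<delta> *\<^sub>R \<delta>) = c \<beta> *\<^sub>R \<beta> + (\<Sum>\<delta>\<in>simple-{\<beta>}. c \<delta> *\<^sub>R \<delta>)"
      by (rule sum.remove[OF finS b])
    define y where "y = k *\<^sub>R \<alpha> + (\<Sum>\<delta>\<in>simple-{\<beta>}. c \<delta> *\<^sub>R \<delta>)"
    have "y \<in> cone (simple - {\<beta>})" unfolding y_def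
      using a ne finS c(1) by (intro cone_add cone_scale cone_mem cone_intro) (auto intro: less_imp_le k)
    moreover have "y \<bullet> v > 0"
    proof -
      have "(\<Sum>\<delta>\<in>simple-{\<beta>}. c \<delta> *\<^sub>R \<delta>) \<bullet> v \<ge> 0" using c(1) S_P by (intro sum_in_cone_v) auto
      moreover have "(k *\<^sub>R \<alpha>) \<bullet> v > 0" using k av by simp
      ultimately show ?thesis unfolding y_def by (simp add: inner_add_left)
    qed
    moreover have "(1 - c \<beta>) *\<^sub>R \<beta> = y"
      using c(2) split \<gamma> unfolding y_def by (simp add: algebra_simps)
    ultimately show False using S_key b by blast
  next
    case False
    then have nP: "- refl \<alpha> \<beta> \<in> P" using P_or \<gamma>R by blast
    obtain c where c: "\<And>\<delta>. \<delta> \<in> simple \<Longrightarrow> c \<delta> \<ge> 0" "- refl \<alpha> \<beta> = (\<Sum>\<delta>\<in>simple. c \<delta> *\<^sub>R \<delta>)"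
      using P_cone[OF nP] unfolding cone_def by blast
    have split: "(\<Sum>\<delta>\<in>simple. c \<delta> *\<^sub>R \<delta>) = c \<alpha> *\<^sub>R \<alpha> + (\<Sum>\<delta>\<in>simple-{\<alpha>}. c \<delta> *\<^sub>R \<delta>)"
      by (rule sum.remove[OF finS a])
    define y where "y = \<beta> + (\<Sum>\<delta>\<in>simple-{\<alpha>}. c \<delta> *\<^sub>R \<delta>)"
    have "y \<in> cone (simple - {\<alpha>})" unfolding y_def
      using b ne finS c(1) by (intro cone_add cone_mem cone_intro) auto
    moreover have "y \<bullet> v > 0"
    proof -
      have "(\<Sum>\<delta>\<in>simple-{\<alpha>}. c \<delta> *\<^sub>R \<delta>) \<bullet> v \<ge> 0" using c(1) S_P by (intro sum_in_cone_v) auto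
      then show ?thesis unfolding y_def using av by (simp add: inner_add_left)
    qed
    moreover have "(k - c \<alpha>) *\<^sub>R \<alpha> = y"
      using c(2) split \<gamma> unfolding y_def by (simp add: algebra_simps)
    ultimately show False using S_key a by blast
  qed
qed

lemma S_indep: assumes s: "(\<Sum>\<delta>\<in>simple. c \<delta> *\<^sub>R \<delta>) = 0" and d: "\<delta> \<in> simple"
  shows "c \<delta> = 0"
proof -
  define p where "p = (\<lambda>\<delta>. max (c \<delta>) 0)"
  define q where "q = (\<lambda>\<delta>. max (- c \<delta>) 0)"
  define \<sigma> where "\<sigma> = (\<Sum>\<delta>\<in>simple. p \<delta> *\<^sub>R \<delta>)"
  define \<tau> where "\<tau> = (\<Sum>\<delta>\<in>simple. q \<delta> *\<^sub>R \<delta>)"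
  have cpq: "c x = p x - q x" for x unfolding p_def q_def by auto
  have "\<sigma> - \<tau> = (\<Sum>\<delta>\<in>simple. c \<delta> *\<^sub>R \<delta>)"
    unfolding \<sigma>_def \<tau>_def cpq by (simp add: sum_subtractf scaleR_diff_left)
  then have st: "\<sigma> = \<tau>" using s by simp
  have "\<sigma> \<bullet> \<tau> = (\<Sum>a\<in>simple. p a * (a \<bullet> \<tau>))"
    unfolding \<sigma>_def by (simp add: inner_sum_left)
  also have "\<dots> = (\<Sum>a\<in>simple. \<Sum>b\<in>simple. (p a * q b) * (a \<bullet> b))"
    unfolding \<tau>_def by (simp add: inner_sum_right sum_distrib_left mult.assoc)
  also have "\<dots> \<le> 0"
  proof (intro sum_nonpos)
    fix a b assume a: "a \<in> simple" and b: "b \<in> simple"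
    show "(p a * q b) * (a \<bullet> b) \<le> 0"
    proof (cases "a = b")
      case True
      have "p a * q b = 0" unfolding p_def q_def True by (cases "c b \<ge> 0") auto
      then show ?thesis by (metis mult_zero_left order_refl)
    next
      case False
      have "p a * q b \<ge> 0" unfolding p_def q_def by simp
      then show ?thesis using S_obtuse[OF a b False] by (simp add: mult_nonneg_nonpos)
    qed
  qed
  finally have "\<sigma> \<bullet> \<sigma> \<le> 0" using st by simp
  then have s0: "\<sigma> = 0" by (metis antisym inner_ge_zero inner_eq_zero_iff)
  have zero_coeff: "f \<delta> = 0"
    if f0: "\<And>x. f x \<ge> 0" and fs: "(\<Sum>\<delta>\<in>simple. f \<delta> *\<^sub>R \<delta>) = 0" for f
  proof -
    have "(\<Sum>\<delta>\<in>simple. f \<delta> * (\<delta> \<bullet> v)) = (\<Sum>\<delta>\<in>simple. f \<delta> *\<^sub>R \<delta>) \<bullet> v"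
      by (simp add: inner_sum_left)
    also have "\<dots> = 0" using fs by simp
    finally have "\<forall>x\<in>simple. f x * (x \<bullet> v) = 0"
      using sum_nonneg_eq_0_iff[OF finS, of "\<lambda>\<delta>. f \<delta> * (\<delta> \<bullet> v)"] f0 P_pos S_P
      by (auto simp: subset_iff less_imp_le)
    then have "f \<delta> * (\<delta> \<bullet> v) = 0" using d by blast
    moreover have "\<delta> \<bullet> v > 0" using P_pos S_P d by auto
    ultimately show ?thesis by simp
  qed
  have sp: "(\<Sum>\<delta>\<in>simple. p \<delta> *\<^sub>R \<delta>) = 0" using s0 unfolding \<sigma>_def .
  have sq: "(\<Sum>\<delta>\<in>simple. q \<delta> *\<^sub>R \<delta>) = 0" using s0 st unfolding \<tau>_def by simp
  have "p \<delta> = 0" by (rule zero_coeff[OF _ sp]) (simp add: p_def)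
  moreover have "q \<delta> = 0" by (rule zero_coeff[OF _ sq]) (simp add: q_def)
  ultimately show ?thesis using cpq by simp
qed

lemma S_coeff: assumes "(\<Sum>\<delta>\<in>simple. c \<delta> *\<^sub>R \<delta>) = (\<Sum>\<delta>\<in>simple. d \<delta> *\<^sub>R \<delta>)" "\<delta> \<in> simple"
  shows "c \<delta> = d \<delta>"
proof -
  have "(\<Sum>\<delta>\<in>simple. (c \<delta> - d \<delta>) *\<^sub>R \<delta>) = 0"
    using assms(1) by (simp add: sum_subtractf scaleR_diff_left)
  then show ?thesis using S_indep[OF _ assms(2)] by fastforce
qed

end

context RS begin

lemma S_perm: assumes a: "\<alpha> \<in> simple" and b: "\<beta> \<in> P" and ne: "\<beta> \<noteq> \<alpha>"
  shows "refl \<alpha> \<beta> \<in> P"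
proof (rule ccontr)
  assume nP: "refl \<alpha> \<beta> \<notin> P"
  have aP: "\<alpha> \<in> P" using a S_P by auto
  have aR: "\<alpha> \<in> R" and bR: "\<beta> \<in> R" using aP b P_R by auto
  obtain c where c: "\<And>\<delta>. \<delta> \<in> simple \<Longrightarrow> c \<delta> \<ge> 0" "\<beta> = (\<Sum>\<delta>\<in>simple. c \<delta> *\<^sub>R \<delta>)"
    using P_cone[OF b] unfolding cone_def by blast
  have split: "(\<Sum>\<delta>\<in>simple. c \<delta> *\<^sub>R \<delta>) = c \<alpha> *\<^sub>R \<alpha> + (\<Sum>\<delta>\<in>simple-{\<alpha>}. c \<delta> *\<^sub>R \<delta>)"
    by (rule sum.remove[OF finS a])
  have "\<exists>\<gamma>\<in>simple-{\<alpha>}. c \<gamma> \<noteq> 0"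
  proof (rule ccontr)
    assume "\<not> (\<exists>\<gamma>\<in>simple-{\<alpha>}. c \<gamma> \<noteq> 0)"
    then have "(\<Sum>\<delta>\<in>simple-{\<alpha>}. c \<delta> *\<^sub>R \<delta>) = 0" by simp
    then have "\<beta> = c \<alpha> *\<^sub>R \<alpha>" using c(2) split by simp
    then have "c \<alpha> = 1 \<or> c \<alpha> = -1" using reduced[OF aR] bR by simp
    then have "\<beta> = \<alpha> \<or> \<beta> = - \<alpha>" using \<open>\<beta> = c \<alpha> *\<^sub>R \<alpha>\<close> by auto
    then show False using ne b P_neg[OF aP] by auto
  qed
  then obtain \<gamma> where g: "\<gamma> \<in> simple" "\<gamma> \<noteq> \<alpha>" "c \<gamma> > 0" using c(1) by (metis DiffE insertI1 less_eq_real_def singletonD)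
  define k where "k = 2 * (\<beta> \<bullet> \<alpha>) / (\<alpha> \<bullet> \<alpha>)"
  define c' where "c' = (\<lambda>\<delta>. c \<delta> - (if \<delta> = \<alpha> then k else 0))"
  have "(\<Sum>\<delta>\<in>simple. c' \<delta> *\<^sub>R \<delta>) = (\<Sum>\<delta>\<in>simple. c \<delta> *\<^sub>R \<delta>) - (\<Sum>\<delta>\<in>simple. (if \<delta> = \<alpha> then k else 0) *\<^sub>R \<delta>)"
    unfolding c'_def by (simp add: sum_subtractf scaleR_diff_left)
  also have "(\<Sum>\<delta>\<in>simple. (if \<delta> = \<alpha> then k else 0) *\<^sub>R \<delta>) = (\<Sum>\<delta>\<in>simple. if \<delta> = \<alpha> then k *\<^sub>R \<delta> else 0)"
    by (rule sum.cong) auto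
  also have "\<dots> = k *\<^sub>R \<alpha>" using finS a by simp
  finally have r1: "refl \<alpha> \<beta> = (\<Sum>\<delta>\<in>simple. c' \<delta> *\<^sub>R \<delta>)" using c(2) unfolding refl_def k_def by simp
  have "- refl \<alpha> \<beta> \<in> P" using P_or[OF refl_R[OF aR bR]] nP by blast
  then obtain d where d: "\<And>\<delta>. \<delta> \<in> simple \<Longrightarrow> d \<delta> \<ge> 0" "- refl \<alpha> \<beta> = (\<Sum>\<delta>\<in>simple. d \<delta> *\<^sub>R \<delta>)"
    using P_cone unfolding cone_def by blast
  have "(\<Sum>\<delta>\<in>simple. (- d \<delta>) *\<^sub>R \<delta>) = - (\<Sum>\<delta>\<in>simple. d \<delta> *\<^sub>R \<delta>)"
    by (simp add: sum_negf)
  moreover have "refl \<alpha> \<beta> = - (- refl \<alpha> \<beta>)" by simp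
  ultimately have "refl \<alpha> \<beta> = (\<Sum>\<delta>\<in>simple. (- d \<delta>) *\<^sub>R \<delta>)" using d(2) by simp
  then have "c' \<gamma> = - d \<gamma>" using S_coeff[OF _ g(1)] r1 by metis
  then show False using g d(1)[OF g(1)] unfolding c'_def by simp
qed

lemma S_refl_self_neg: "\<alpha> \<in> simple \<Longrightarrow> refl \<alpha> \<alpha> \<notin> P"
  using refl_self[of \<alpha>] S_P P_nz P_neg by auto

definition ev :: "'a list \<Rightarrow> 'a \<Rightarrow> 'a" where "ev ws = foldr (\<lambda>a f. refl a \<circ> f) ws id"

lemma ev_Nil [simp]: "ev [] = id" by (simp add: ev_def)
lemma ev_Cons [simp]: "ev (a # ws) = refl a \<circ> ev ws" by (simp add: ev_def)
lemma ev_append: "ev (xs @ ys) = ev xs \<circ> ev ys"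
  by (induction xs) (simp_all add: comp_assoc)

lemma ev_W: "set ws \<subseteq> R \<Longrightarrow> ev ws \<in> W"
  by (induction ws) (auto intro: weyl_group.intros)

lemma refl_refl_comp: "\<alpha> \<in> R \<Longrightarrow> refl \<alpha> \<circ> refl \<alpha> = id"
  using refl_refl R_nz by (auto simp: fun_eq_iff)

lemma ev_rev: "set ws \<subseteq> R \<Longrightarrow> ev (rev ws) \<circ> ev ws = id \<and> ev ws \<circ> ev (rev ws) = id"
proof (induction ws)
  case Nil then show ?case by simp
next
  case (Cons a ws)
  have wsR: "set ws \<subseteq> R" and aR: "a \<in> R" using Cons.prems by auto
  have IH: "ev (rev ws) \<circ> ev ws = id" "ev ws \<circ> ev (rev ws) = id" using Cons.IH[OF wsR] by blast+
  have "ev (rev (a # ws)) \<circ> ev (a # ws) = ev (rev ws) \<circ> (refl a \<circ> refl a) \<circ> ev ws"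
    by (simp add: ev_append comp_assoc)
  also have "\<dots> = id" using IH refl_refl_comp[OF aR] by simp
  finally have 1: "ev (rev (a # ws)) \<circ> ev (a # ws) = id" .
  have "ev (a # ws) \<circ> ev (rev (a # ws)) = refl a \<circ> (ev ws \<circ> ev (rev ws)) \<circ> refl a"
    by (simp add: ev_append comp_assoc)
  also have "\<dots> = id" using IH refl_refl_comp[OF aR] by simp
  finally have 2: "ev (a # ws) \<circ> ev (rev (a # ws)) = id" .
  show ?case using 1 2 by (rule conjI)
qed

lemma conj_simple: "\<beta> \<in> P \<Longrightarrow> \<exists>ws \<alpha>. set ws \<subseteq> simple \<and> \<alpha> \<in> simple \<and> ev ws \<alpha> = \<beta>"
proof (induction "card {\<gamma>\<in>P. \<gamma> \<bullet> v < \<beta> \<bullet> v}" arbitrary: \<beta> rule: less_induct)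
  case less
  show ?case
  proof (cases "\<beta> \<in> simple")
    case True then show ?thesis by (intro exI[of _ "[]"] exI[of _ \<beta>]) simp
  next
    case False
    obtain c where c: "\<And>\<delta>. \<delta> \<in> simple \<Longrightarrow> c \<delta> \<ge> 0" "\<beta> = (\<Sum>\<delta>\<in>simple. c \<delta> *\<^sub>R \<delta>)"
      using P_cone[OF less.prems] unfolding cone_def by blast
    have "\<beta> \<bullet> \<beta> = (\<Sum>\<delta>\<in>simple. c \<delta> * (\<delta> \<bullet> \<beta>))"
      by (subst (1) c(2)) (simp add: inner_sum_left)
    moreover have "\<beta> \<bullet> \<beta> > 0" using P_sq less.prems by auto
    ultimately have "\<exists>\<alpha>\<in>simple. c \<alpha> * (\<alpha> \<bullet> \<beta>) > 0"
    proof -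
      assume s1: "\<beta> \<bullet> \<beta> = (\<Sum>\<delta>\<in>simple. c \<delta> * (\<delta> \<bullet> \<beta>))" and s2: "\<beta> \<bullet> \<beta> > 0"
      show ?thesis
      proof (rule ccontr)
        assume "\<not> ?thesis"
        then have "\<forall>\<alpha>\<in>simple. c \<alpha> * (\<alpha> \<bullet> \<beta>) \<le> 0" by (simp add: not_less)
        then have "(\<Sum>\<delta>\<in>simple. c \<delta> * (\<delta> \<bullet> \<beta>)) \<le> 0" by (intro sum_nonpos) blast
        then show False using s1 s2 by simp
      qed
    qed
    then obtain \<alpha> where a: "\<alpha> \<in> simple" "c \<alpha> * (\<alpha> \<bullet> \<beta>) > 0" by blast
    have ab: "\<alpha> \<bullet> \<beta> > 0" using a c(1)[OF a(1)] by (simp add: zero_less_mult_iff)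
    have aP: "\<alpha> \<in> P" using a S_P by auto
    have ne: "\<beta> \<noteq> \<alpha>" using False a by auto
    define \<beta>' where "\<beta>' = refl \<alpha> \<beta>"
    have b'P: "\<beta>' \<in> P" unfolding \<beta>'_def using S_perm[OF a(1) less.prems ne] .
    define k where "k = 2 * (\<beta> \<bullet> \<alpha>) / (\<alpha> \<bullet> \<alpha>)"
    have k: "k > 0" unfolding k_def using ab P_sq[OF aP] by (simp add: inner_commute)
    have "\<beta>' \<bullet> v = \<beta> \<bullet> v - k * (\<alpha> \<bullet> v)" unfolding \<beta>'_def refl_def k_def by (simp add: inner_diff_left)
    then have lt: "\<beta>' \<bullet> v < \<beta> \<bullet> v" using k P_pos[OF aP] by simp
    have "{\<gamma>\<in>P. \<gamma> \<bullet> v < \<beta>' \<bullet> v} \<subset> {\<gamma>\<in>P. \<gamma> \<bullet> v < \<beta> \<bullet> v}"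
      using lt b'P by auto
    then have "card {\<gamma>\<in>P. \<gamma> \<bullet> v < \<beta>' \<bullet> v} < card {\<gamma>\<in>P. \<gamma> \<bullet> v < \<beta> \<bullet> v}"
      by (rule psubset_card_mono[rotated]) (simp add: finP)
    then obtain ws \<alpha>' where ws: "set ws \<subseteq> simple" "\<alpha>' \<in> simple" "ev ws \<alpha>' = \<beta>'"
      using less.hyps b'P by blast
    have "ev (\<alpha> # ws) \<alpha>' = \<beta>"
      using ws(3) refl_refl[OF P_nz[OF aP]] unfolding \<beta>'_def by simp
    then show ?thesis using ws a by (intro exI[of _ "\<alpha> # ws"] exI[of _ \<alpha>']) auto
  qed
qed

lemma refl_word: assumes b: "\<beta> \<in> R" shows "\<exists>ws. set ws \<subseteq> simple \<and> refl \<beta> = ev ws"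
proof -
  have "pos \<beta> \<in> P" using pos_P[OF b] .
  then obtain us \<alpha> where us: "set us \<subseteq> simple" "\<alpha> \<in> simple" "ev us \<alpha> = pos \<beta>"
    using conj_simple by blast
  have usR: "set us \<subseteq> R" using us(1) S_R by auto
  have uW: "ev us \<in> W" using ev_W[OF usR] .
  have c: "refl (pos \<beta>) \<circ> ev us = ev us \<circ> refl \<alpha>" using W_refl_conj[OF uW, of \<alpha>] us(3) by simp
  have "refl \<beta> = refl (pos \<beta>)" by (simp add: pos_def refl_uminus)
  also have "\<dots> = refl (pos \<beta>) \<circ> (ev us \<circ> ev (rev us))" using ev_rev[OF usR] by simp
  also have "\<dots> = ev us \<circ> refl \<alpha> \<circ> ev (rev us)" by (simp only: comp_assoc[symmetric] c)
  also have "\<dots> = ev (us @ [\<alpha>] @ rev us)" by (simp add: ev_append comp_assoc)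
  finally show ?thesis using us by (intro exI[of _ "us @ [\<alpha>] @ rev us"]) auto
qed

lemma W_gen: "w \<in> W \<Longrightarrow> \<exists>ws. set ws \<subseteq> simple \<and> w = ev ws"
proof (induction rule: weyl_group.induct)
  case id_in then show ?case by (intro exI[of _ "[]"]) simp
next
  case (step w \<alpha>)
  then obtain ws where ws: "set ws \<subseteq> simple" "w = ev ws" by blast
  obtain us where us: "set us \<subseteq> simple" "refl \<alpha> = ev us" using refl_word[OF step(2)] by blast
  show ?case using ws us by (intro exI[of _ "us @ ws"]) (simp add: ev_append)
qed

lemma exchange: "set ws \<subseteq> simple \<Longrightarrow> a \<in> simple \<Longrightarrow> ev ws a \<notin> P \<Longrightarrow>
   \<exists>ws'. set ws' \<subseteq> simple \<and> length ws' + 1 = length ws \<and> ev ws' = ev ws \<circ> refl a"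
proof (induction ws)
  case Nil then show ?case using S_P by auto
next
  case (Cons b ws0)
  have b: "b \<in> simple" and ws0: "set ws0 \<subseteq> simple" using Cons.prems by auto
  have ws0R: "set ws0 \<subseteq> R" using ws0 S_R by auto
  show ?case
  proof (cases "ev ws0 a \<in> P")
    case False
    then obtain ws' where ws': "set ws' \<subseteq> simple" "length ws' + 1 = length ws0" "ev ws' = ev ws0 \<circ> refl a"
      using Cons.IH ws0 Cons.prems(2) by blast
    show ?thesis using ws' b by (intro exI[of _ "b # ws'"]) (simp add: comp_assoc)
  next
    case True
    have "refl b (ev ws0 a) \<notin> P" using Cons.prems(3) by simp
    then have eq: "ev ws0 a = b" using S_perm[OF b True] by blast
    have c: "refl b \<circ> ev ws0 = ev ws0 \<circ> refl a"
      using W_refl_conj[OF ev_W[OF ws0R], of a] eq by simp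
    have "ev (b # ws0) \<circ> refl a = ev ws0 \<circ> (refl a \<circ> refl a)" unfolding ev_Cons c by (rule comp_assoc)
    also have "\<dots> = ev ws0" using refl_refl_comp S_R Cons.prems(2) by simp
    finally have e: "ev ws0 = ev (b # ws0) \<circ> refl a" by simp
    show ?thesis
    proof (intro exI[of _ ws0] conjI)
      show "set ws0 \<subseteq> simple" by (rule ws0)
      show "length ws0 + 1 = length (b # ws0)" by simp
      show "ev ws0 = ev (b # ws0) \<circ> refl a" by (rule e)
    qed
  qed
qed

lemma K_trivial_word: "set ws \<subseteq> simple \<Longrightarrow> (\<forall>\<alpha>\<in>P. ev ws \<alpha> \<in> P) \<Longrightarrow> ev ws = id"
proof (induction "length ws" arbitrary: ws rule: less_induct)
  case less
  show ?case
  proof (cases ws rule: rev_exhaust)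
    case Nil then show ?thesis by simp
  next
    case (snoc ws0 a)
    have a: "a \<in> simple" and ws0: "set ws0 \<subseteq> simple" using less.prems snoc by auto
    have aP: "a \<in> P" using a S_P by auto
    have ws0R: "set ws0 \<subseteq> R" using ws0 S_R by auto
    have "ev ws a = ev ws0 (- a)" using snoc refl_self[OF P_nz[OF aP]] by (simp add: ev_append)
    also have "\<dots> = - ev ws0 a" using W_neg[OF ev_W[OF ws0R]] .
    finally have "- ev ws0 a \<in> P" using less.prems(2) aP by metis
    then have "ev ws0 a \<notin> P" using P_neg by force
    then obtain ws' where ws': "set ws' \<subseteq> simple" "length ws' + 1 = length ws0" "ev ws' = ev ws0 \<circ> refl a"
      using exchange[OF ws0 a] by blast
    have e: "ev ws' = ev ws" using ws'(3) snoc by (simp add: ev_append)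
    have "ev ws' = id"
      using less.hyps[of ws'] ws' snoc less.prems(2) e by simp
    then show ?thesis using e by simp
  qed
qed

lemma K_trivial: "w \<in> W \<Longrightarrow> (\<forall>\<alpha>\<in>P. w \<alpha> \<in> P) \<Longrightarrow> w = id"
  using W_gen K_trivial_word by blast

end

context RS begin

abbreviation \<rho> where "\<rho> \<equiv> rho P"

definition cp :: "'a \<Rightarrow> 'a \<Rightarrow> real" where "cp x \<alpha> = 2 * (x \<bullet> \<alpha>) / (\<alpha> \<bullet> \<alpha>)"

lemma cp_add: "cp (x + y) \<alpha> = cp x \<alpha> + cp y \<alpha>"
  unfolding cp_def by (simp add: inner_add_left add_divide_distrib distrib_left)
lemma cp_diff: "cp (x - y) \<alpha> = cp x \<alpha> - cp y \<alpha>"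
  unfolding cp_def by (simp add: inner_diff_left diff_divide_distrib right_diff_distrib)
lemma cp_scale: "cp (c *\<^sub>R x) \<alpha> = c * cp x \<alpha>"
  unfolding cp_def by simp
lemma cp_sum: "cp (sum f A) \<alpha> = (\<Sum>x\<in>A. cp (f x) \<alpha>)"
  unfolding cp_def by (simp add: inner_sum_left sum_divide_distrib sum_distrib_left)
lemma cp_neg_root: "cp x (- \<alpha>) = - cp x \<alpha>"
  unfolding cp_def by simp
lemma cp_W: "w \<in> W \<Longrightarrow> cp (w x) (w \<alpha>) = cp x \<alpha>"
  unfolding cp_def by (simp add: W_orth)
lemma refl_cp: "refl \<alpha> x = x - cp x \<alpha> *\<^sub>R \<alpha>"
  unfolding refl_def cp_def ..
lemma cp_R: "\<alpha> \<in> R \<Longrightarrow> \<beta> \<in> R \<Longrightarrow> cp \<beta> \<alpha> \<in> \<int>"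
  unfolding cp_def using int_R by blast
lemma div_pos_iff_aux: "(b::real) > 0 \<Longrightarrow> (0 < a / b) = (0 < a)"
  by (simp add: zero_less_divide_iff)
lemma div_nonneg_iff_aux: "(b::real) > 0 \<Longrightarrow> (0 \<le> a / b) = (0 \<le> a)"
  by (simp add: zero_le_divide_iff)
lemma cp_sign: assumes "\<alpha> \<noteq> 0" shows "(cp x \<alpha> > 0) = (x \<bullet> \<alpha> > 0)"
proof -
  have p: "\<alpha> \<bullet> \<alpha> > 0" using assms by simp
  show ?thesis unfolding cp_def div_pos_iff_aux[OF p] by simp
qed
lemma cp_sign_ge: assumes "\<alpha> \<noteq> 0" shows "(cp x \<alpha> \<ge> 0) = (x \<bullet> \<alpha> \<ge> 0)"
proof -
  have p: "\<alpha> \<bullet> \<alpha> > 0" using assms by simp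
  show ?thesis unfolding cp_def div_nonneg_iff_aux[OF p] by simp
qed

lemma W_rho: assumes w: "w \<in> W"
  shows "w \<rho> = \<rho> + (\<Sum>\<alpha>\<in>{\<alpha>\<in>P. w \<alpha> \<notin> P}. w \<alpha>)"
proof -
  let ?X = "{\<alpha>. w \<alpha> \<in> P}"
  have N: "P - ?X = {\<alpha>\<in>P. w \<alpha> \<notin> P}" by auto
  have "(\<Sum>\<beta>\<in>P. \<beta>) = (\<Sum>\<alpha>\<in>P. pos (w \<alpha>))"
    using sum.reindex_bij_betw[OF pos_bij[OF w], of "\<lambda>\<beta>. \<beta>"] by simp
  also have "\<dots> = (\<Sum>\<alpha>\<in>P \<inter> ?X. pos (w \<alpha>)) + (\<Sum>\<alpha>\<in>P - ?X. pos (w \<alpha>))"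
    by (rule sum.Int_Diff[OF finP])
  also have "(\<Sum>\<alpha>\<in>P \<inter> ?X. pos (w \<alpha>)) = (\<Sum>\<alpha>\<in>P \<inter> ?X. w \<alpha>)"
    by (rule sum.cong) (auto simp: pos_def)
  also have "(\<Sum>\<alpha>\<in>P - ?X. pos (w \<alpha>)) = (\<Sum>\<alpha>\<in>P - ?X. - w \<alpha>)"
    by (rule sum.cong) (auto simp: pos_def)
  finally have e1: "(\<Sum>\<beta>\<in>P. \<beta>) = (\<Sum>\<alpha>\<in>P \<inter> ?X. w \<alpha>) - (\<Sum>\<alpha>\<in>P - ?X. w \<alpha>)"
    by (simp add: sum_negf)
  have e2: "(\<Sum>\<alpha>\<in>P. w \<alpha>) = (\<Sum>\<alpha>\<in>P \<inter> ?X. w \<alpha>) + (\<Sum>\<alpha>\<in>P - ?X. w \<alpha>)"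
    by (rule sum.Int_Diff[OF finP])
  have e3: "(\<Sum>\<alpha>\<in>P. w \<alpha>) = (\<Sum>\<beta>\<in>P. \<beta>) + 2 *\<^sub>R (\<Sum>\<alpha>\<in>P - ?X. w \<alpha>)"
    by (simp only: e1 e2 scaleR_2) (simp add: algebra_simps)
  have "w \<rho> = (1/2) *\<^sub>R (\<Sum>\<alpha>\<in>P. w \<alpha>)"
    unfolding rho_def by (simp add: W_scale[OF w] W_sum[OF w])
  also have "\<dots> = (1/2) *\<^sub>R ((\<Sum>\<beta>\<in>P. \<beta>) + 2 *\<^sub>R (\<Sum>\<alpha>\<in>P - ?X. w \<alpha>))"
    by (simp only: e3)
  also have "\<dots> = \<rho> + (\<Sum>\<alpha>\<in>P - ?X. w \<alpha>)"
    unfolding rho_def by (simp add: scaleR_add_right)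
  finally show ?thesis using N by simp
qed

lemma stab_rho: assumes w: "w \<in> W" and e: "w \<rho> = \<rho>" shows "w = id"
proof -
  let ?N = "{\<alpha>\<in>P. w \<alpha> \<notin> P}"
  have s: "(\<Sum>\<alpha>\<in>?N. w \<alpha>) = 0" using W_rho[OF w] e by simp
  have "?N = {}"
  proof (rule ccontr)
    assume ne: "?N \<noteq> {}"
    have "(\<Sum>\<alpha>\<in>?N. (- w \<alpha>) \<bullet> v) > 0"
    proof (rule sum_pos)
      show "finite ?N" using finP by simp
      show "?N \<noteq> {}" by fact
      fix \<alpha> assume a: "\<alpha> \<in> ?N"
      then have "- w \<alpha> \<in> P" using P_or[OF W_R[OF w P_R]] by auto
      then show "(- w \<alpha>) \<bullet> v > 0" by (rule P_pos)
    qed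
    also have "(\<Sum>\<alpha>\<in>?N. (- w \<alpha>) \<bullet> v) = - ((\<Sum>\<alpha>\<in>?N. w \<alpha>) \<bullet> v)"
      by (simp add: inner_sum_left sum_negf)
    finally show False using s by simp
  qed
  then show ?thesis using K_trivial[OF w] by auto
qed

lemma rho_simple: assumes a: "\<alpha> \<in> simple" shows "refl \<alpha> \<rho> = \<rho> - \<alpha>"
proof -
  have aR: "\<alpha> \<in> R" using S_R a .
  have "{\<beta>\<in>P. refl \<alpha> \<beta> \<notin> P} = {\<alpha>}"
    using S_perm[OF a] S_refl_self_neg[OF a] S_P a by auto
  then show ?thesis using W_rho[OF W_refl[OF aR]] refl_self[OF R_nz[OF aR]] by simp
qed

lemma cp_rho_simple: assumes a: "\<alpha> \<in> simple" shows "cp \<rho> \<alpha> = 1"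
proof -
  have a0: "\<alpha> \<noteq> 0" using R_nz S_R a by auto
  have "\<rho> - cp \<rho> \<alpha> *\<^sub>R \<alpha> = \<rho> - \<alpha>" using rho_simple[OF a] by (simp add: refl_cp)
  then have "cp \<rho> \<alpha> *\<^sub>R \<alpha> = 1 *\<^sub>R \<alpha>" by simp
  then have "cp \<rho> \<alpha> = 1 \<or> \<alpha> = 0" by (simp only: scaleR_cancel_right)
  then show ?thesis using a0 by blast
qed

lemma rho_pos: assumes a: "\<alpha> \<in> P" shows "\<rho> \<bullet> \<alpha> > 0"
proof -
  obtain c where c: "\<And>\<delta>. \<delta> \<in> simple \<Longrightarrow> c \<delta> \<ge> 0" "\<alpha> = (\<Sum>\<delta>\<in>simple. c \<delta> *\<^sub>R \<delta>)"
    using P_cone[OF a] unfolding cone_def by blast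
  have rd: "\<rho> \<bullet> \<delta> = (\<delta> \<bullet> \<delta>) / 2" if "\<delta> \<in> simple" for \<delta>
    using cp_rho_simple[OF that] P_sq[of \<delta>] S_P that unfolding cp_def by (auto simp: field_simps)
  have e: "\<rho> \<bullet> \<alpha> = (\<Sum>\<delta>\<in>simple. c \<delta> * ((\<delta> \<bullet> \<delta>) / 2))"
    by (subst c(2)) (simp add: inner_sum_right rd)
  have nn: "\<forall>\<delta>\<in>simple. c \<delta> * ((\<delta> \<bullet> \<delta>) / 2) \<ge> 0" using c(1) by simp
  show ?thesis
  proof (rule ccontr)
    assume "\<not> ?thesis"
    then have "(\<Sum>\<delta>\<in>simple. c \<delta> * ((\<delta> \<bullet> \<delta>) / 2)) = 0"
      using e sum_nonneg[of simple "\<lambda>\<delta>. c \<delta> * ((\<delta> \<bullet> \<delta>) / 2)"] nn by simp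
    then have z: "\<forall>\<delta>\<in>simple. c \<delta> * ((\<delta> \<bullet> \<delta>) / 2) = 0"
    proof -
      assume s0: "(\<Sum>\<delta>\<in>simple. c \<delta> * ((\<delta> \<bullet> \<delta>) / 2)) = 0"
      have "(\<Sum>\<delta>\<in>simple. c \<delta> * ((\<delta> \<bullet> \<delta>) / 2)) = 0 \<longleftrightarrow> (\<forall>\<delta>\<in>simple. c \<delta> * ((\<delta> \<bullet> \<delta>) / 2) = 0)"
        by (rule sum_nonneg_eq_0_iff[OF finS]) (use nn in blast)
      then show ?thesis using s0 by blast
    qed
    have "\<forall>\<delta>\<in>simple. c \<delta> = 0"
    proof
      fix \<delta> assume d: "\<delta> \<in> simple"
      have "\<delta> \<bullet> \<delta> > 0" using P_sq S_P d by auto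
      then show "c \<delta> = 0" using z d by auto
    qed
    then have "\<alpha> = 0" using c(2) by simp
    then show False using P_nz a by auto
  qed
qed

lemma dom_simple: assumes x: "\<And>\<delta>. \<delta> \<in> simple \<Longrightarrow> x \<bullet> \<delta> \<ge> 0" and a: "\<alpha> \<in> P"
  shows "x \<bullet> \<alpha> \<ge> 0"
proof -
  obtain c where c: "\<And>\<delta>. \<delta> \<in> simple \<Longrightarrow> c \<delta> \<ge> 0" "\<alpha> = (\<Sum>\<delta>\<in>simple. c \<delta> *\<^sub>R \<delta>)"
    using P_cone[OF a] unfolding cone_def by blast
  have "x \<bullet> \<alpha> = (\<Sum>\<delta>\<in>simple. c \<delta> * (x \<bullet> \<delta>))" by (subst c(2)) (simp add: inner_sum_right)
  also have "\<dots> \<ge> 0" using c(1) x by (intro sum_nonneg) simp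
  finally show ?thesis .
qed

abbreviation L where "L \<equiv> weight_lattice R"

lemma L_iff: "x \<in> L \<longleftrightarrow> (\<forall>\<alpha>\<in>R. cp x \<alpha> \<in> \<int>)"
  unfolding weight_lattice_def cp_def by simp

lemma L_add: "x \<in> L \<Longrightarrow> y \<in> L \<Longrightarrow> x + y \<in> L"
  unfolding L_iff cp_add by auto
lemma L_diff: "x \<in> L \<Longrightarrow> y \<in> L \<Longrightarrow> x - y \<in> L"
  unfolding L_iff cp_diff by auto
lemma L_neg: "x \<in> L \<Longrightarrow> - x \<in> L"
  using L_diff[of 0 x] by (simp add: L_iff cp_def)
lemma L_0: "0 \<in> L" unfolding L_iff cp_def by simp
lemma L_int: "x \<in> L \<Longrightarrow> of_int k *\<^sub>R x \<in> L"
  unfolding L_iff cp_scale by auto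
lemma L_nat: "x \<in> L \<Longrightarrow> of_nat k *\<^sub>R x \<in> L"
  using L_int[of x "int k"] by simp
lemma L_sum: "(\<And>a. a \<in> A \<Longrightarrow> f a \<in> L) \<Longrightarrow> sum f A \<in> L"
  by (induction A rule: infinite_finite_induct) (auto intro: L_add L_0)
lemma R_L: "\<alpha> \<in> R \<Longrightarrow> \<alpha> \<in> L"
  unfolding L_iff using cp_R by blast
lemma L_W: assumes w: "w \<in> W" and x: "x \<in> L" shows "w x \<in> L"
  unfolding L_iff
proof
  fix \<alpha> assume a: "\<alpha> \<in> R"
  have "cp (w x) \<alpha> = cp (w x) (w (inv w \<alpha>))" using w by simp
  also have "\<dots> = cp x (inv w \<alpha>)" by (rule cp_W[OF w])
  also have "\<dots> \<in> \<int>" using x W_R[OF W_inv_in[OF w] a] unfolding L_iff by blast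
  finally show "cp (w x) \<alpha> \<in> \<int>" .
qed

lemma rho_L: "\<rho> \<in> L"
  unfolding L_iff
proof
  fix \<beta> assume b: "\<beta> \<in> R"
  obtain us \<alpha> where us: "set us \<subseteq> simple" "\<alpha> \<in> simple" "ev us \<alpha> = pos \<beta>"
    using conj_simple[OF pos_P[OF b]] by blast
  have uW: "ev us \<in> W" using ev_W us(1) S_R by blast
  define u where "u = ev us"
  have uW': "u \<in> W" using uW u_def by simp
  have "cp \<rho> (pos \<beta>) = cp (u (inv u \<rho>)) (u \<alpha>)" using us(3) uW' u_def by simp
  also have "\<dots> = cp (inv u \<rho>) \<alpha>" by (rule cp_W[OF uW'])
  also have "inv u \<rho> = \<rho> + (\<Sum>\<gamma>\<in>{\<gamma>\<in>P. inv u \<gamma> \<notin> P}. inv u \<gamma>)" by (rule W_rho[OF W_inv_in[OF uW']])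
  also have "cp \<dots> \<alpha> = 1 + (\<Sum>\<gamma>\<in>{\<gamma>\<in>P. inv u \<gamma> \<notin> P}. cp (inv u \<gamma>) \<alpha>)"
    by (simp add: cp_add cp_sum cp_rho_simple[OF us(2)])
  also have "\<dots> \<in> \<int>"
  proof (intro Ints_add Ints_sum)
    show "1 \<in> \<int>" by simp
    fix \<gamma> assume "\<gamma> \<in> {\<gamma>\<in>P. inv u \<gamma> \<notin> P}"
    then have "inv u \<gamma> \<in> R" using W_R[OF W_inv_in[OF uW']] P_R by blast
    then show "cp (inv u \<gamma>) \<alpha> \<in> \<int>" using cp_R S_R us(2) by blast
  qed
  finally have "cp \<rho> (pos \<beta>) \<in> \<int>" .
  then show "cp \<rho> \<beta> \<in> \<int>" by (cases "\<beta> \<in> P") (auto simp: pos_def cp_neg_root)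
qed

definition sdom :: "'a \<Rightarrow> bool" where "sdom x \<longleftrightarrow> (\<forall>\<alpha>\<in>P. x \<bullet> \<alpha> > 0)"

lemma sdom_minus_rho: assumes x: "x \<in> L" "sdom x" shows "x - \<rho> \<in> dominant R P"
proof -
  have s: "(x - \<rho>) \<bullet> \<delta> \<ge> 0" if d: "\<delta> \<in> simple" for \<delta>
  proof -
    have d0: "\<delta> \<noteq> 0" using d S_R R_nz by auto
    have "cp x \<delta> \<in> \<int>" using x(1) S_R d unfolding L_iff by blast
    moreover have "cp x \<delta> > 0" using x(2) d S_P d0 unfolding sdom_def by (auto simp: cp_sign)
    ultimately have "cp x \<delta> \<ge> 1" by (metis Ints_cases of_int_0_less_iff of_int_1_le_iff zero_less_imp_eq_int less_le_not_le linorder_not_le int_one_le_iff_zero_less)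
    then have "cp (x - \<rho>) \<delta> \<ge> 0" using cp_rho_simple[OF d] by (simp add: cp_diff)
    then show ?thesis using cp_sign_ge[OF d0] by simp
  qed
  have "x - \<rho> \<in> L" using L_diff[OF x(1) rho_L] .
  moreover have "\<forall>\<alpha>\<in>P. (x - \<rho>) \<bullet> \<alpha> \<ge> 0" using dom_simple s by blast
  ultimately show ?thesis unfolding dominant_def by simp
qed

lemma dom_plus_rho: assumes m: "\<mu> \<in> dominant R P" shows "\<mu> + \<rho> \<in> L" "sdom (\<mu> + \<rho>)"
proof -
  show "\<mu> + \<rho> \<in> L" using m rho_L L_add unfolding dominant_def by blast
  show "sdom (\<mu> + \<rho>)" unfolding sdom_def
  proof
    fix \<alpha> assume a: "\<alpha> \<in> P"
    have "\<mu> \<bullet> \<alpha> \<ge> 0" using m a unfolding dominant_def by blast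
    then show "(\<mu> + \<rho>) \<bullet> \<alpha> > 0" using rho_pos[OF a] by (simp add: inner_add_left)
  qed
qed

lemma dom_rep: "\<exists>w\<in>W. \<forall>\<alpha>\<in>P. w y \<bullet> \<alpha> \<ge> 0"
proof -
  let ?f = "\<lambda>u. u y \<bullet> \<rho>"
  have ne: "W \<noteq> {}" using weyl_group.id_in by blast
  define m where "m = Max (?f ` W)"
  have "m \<in> ?f ` W" unfolding m_def using W_finite ne by (intro Max_in) auto
  then obtain w where w: "w \<in> W" "?f w = m" by blast
  have mx: "?f u \<le> ?f w" if "u \<in> W" for u
  proof -
    have "?f u \<le> m" unfolding m_def by (rule Max_ge) (use W_finite that in auto)
    then show ?thesis using w(2) by simp
  qed
  show ?thesis
  proof (intro bexI[OF _ w(1)] ballI)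
    fix \<alpha> assume a: "\<alpha> \<in> P"
    show "w y \<bullet> \<alpha> \<ge> 0"
    proof (rule ccontr)
      assume "\<not> ?thesis"
      then have neg: "w y \<bullet> \<alpha> < 0" by simp
      have a0: "\<alpha> \<noteq> 0" using P_nz a .
      have c: "cp (w y) \<alpha> < 0" using neg a0 unfolding cp_def by (simp add: divide_neg_pos)
      have "(refl \<alpha> \<circ> w) \<in> W" using weyl_group.step[OF w(1) P_R[OF a]] .
      then have "?f (refl \<alpha> \<circ> w) \<le> ?f w" by (rule mx)
      moreover have "?f (refl \<alpha> \<circ> w) = ?f w - cp (w y) \<alpha> * (\<alpha> \<bullet> \<rho>)"
        by (simp add: refl_cp inner_diff_left)
      moreover have "cp (w y) \<alpha> * (\<alpha> \<bullet> \<rho>) < 0"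
        using c rho_pos[OF a] by (simp add: inner_commute mult_neg_pos)
      ultimately show False by simp
    qed
  qed
qed

lemma sdom_unique: assumes w: "w \<in> W" and x: "sdom x" and wx: "sdom (w x)" shows "w = id"
proof (rule K_trivial[OF w], rule ballI)
  fix \<alpha> assume a: "\<alpha> \<in> P"
  show "w \<alpha> \<in> P"
  proof (rule ccontr)
    assume "w \<alpha> \<notin> P"
    then have "- w \<alpha> \<in> P" using P_or W_R[OF w P_R[OF a]] by blast
    then have "w x \<bullet> (- w \<alpha>) > 0" using wx unfolding sdom_def by blast
    moreover have "w x \<bullet> w \<alpha> = x \<bullet> \<alpha>" by (rule W_orth[OF w])
    moreover have "x \<bullet> \<alpha> > 0" using x a unfolding sdom_def by blast
    ultimately show False by simp
  qed
qed

end


section \<open>Finitely supported functions\<close>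

type_synonym 'a fs = "'a \<Rightarrow>\<^sub>0 int"

abbreviation lk where "lk \<equiv> Poly_Mapping.lookup"
abbreviation ks where "ks \<equiv> Poly_Mapping.keys"

lemma lookup_mult_grp:
  fixes F G :: "'a::ab_group_add fs"
  shows "lk (F * G) k = (\<Sum>l\<in>ks F. lk F l * lk G (k - l))"
proof -
  have inner: "Sum_any (\<lambda>q. lk G q when k = l + q) = lk G (k - l)" for l :: 'a
  proof -
    have "(\<lambda>q::'a. lk G q when k = l + q) = (\<lambda>q. if q = k - l then lk G q else 0)"
      by (auto simp: fun_eq_iff when_def)
    then show ?thesis by (simp only:) (rule Sum_any.delta)
  qed
  have "lk (F * G) k = Sum_any (\<lambda>l. lk F l * lk G (k - l))"
    unfolding lookup_mult inner ..
  also have "\<dots> = (\<Sum>l\<in>ks F. lk F l * lk G (k - l))"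
    by (rule Sum_any.expand_superset) (auto simp: in_keys_iff)
  finally show ?thesis .
qed

lemma lookup_single_mult:
  fixes G :: "'a::ab_group_add fs"
  shows "lk (Poly_Mapping.single a c * G) k = c * lk G (k - a)"
proof (cases "c = 0")
  case True then show ?thesis by simp
next
  case False
  then have kk: "ks (Poly_Mapping.single a c) = {a}" by simp
  show ?thesis unfolding lookup_mult_grp kk by simp
qed

lemma of_int_single: "(of_int s :: 'a::ab_group_add fs) = Poly_Mapping.single 0 s"
proof (cases s rule: int_cases)
  case (nonneg n)
  have "(of_int s :: 'a fs) = of_nat n" using nonneg by simp
  also have "\<dots> = Poly_Mapping.single 0 (of_nat n)" by (rule single_of_nat[symmetric])
  finally show ?thesis using nonneg by simp
next
  case (neg n)
  have "(of_int s :: 'a fs) = of_int (- int (Suc n))" using neg by simp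
  also have "\<dots> = - of_nat (Suc n)" by (simp only: of_int_minus of_int_of_nat_eq)
  also have "\<dots> = - Poly_Mapping.single 0 (of_nat (Suc n))" by (simp only: single_of_nat)
  also have "\<dots> = Poly_Mapping.single 0 (- of_nat (Suc n))" by (simp only: single_uminus)
  finally show ?thesis using neg by simp
qed

lemma lookup_of_int_mult:
  fixes F :: "'a::ab_group_add fs"
  shows "lk (of_int s * F) k = s * lk F k"
  by (simp add: of_int_single lookup_single_mult)

lemma lookup_of_int: "lk (of_int s :: 'a::ab_group_add fs) k = (if k = 0 then s else 0)"
  by (simp add: of_int_single lookup_single)

abbreviation ee :: "'a \<Rightarrow> 'a fs" where "ee x \<equiv> Poly_Mapping.single x 1"

lemma ee_mult: "ee (a::'a::ab_group_add) * ee b = ee (a + b)"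
  by (simp add: mult_single)

lemma lookup_ee_mult:
  fixes G :: "'a::ab_group_add fs"
  shows "lk (ee a * G) k = lk G (k - a)"
  by (simp add: lookup_single_mult)

lemma lookup_ee: "lk (ee a) k = (if a = k then 1 else 0)"
  by (simp add: lookup_single when_def)

lemma prod_ee: "finite A \<Longrightarrow> (\<Prod>x\<in>A. ee (f x :: 'a::ab_group_add)) = ee (\<Sum>x\<in>A. f x)"
  by (induction A rule: finite_induct) (simp_all add: ee_mult)

lemma keys_mult_grp: "x \<in> ks (F * G) \<Longrightarrow> \<exists>a\<in>ks F. \<exists>b\<in>ks (G::'a::ab_group_add fs). x = a + b"
  using keys_mult[of F G] by blast

lemma cancel_unit:
  fixes F G :: "'a::ab_group_add fs"
  assumes "ee a * F = ee a * G" shows "F = G"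
proof (rule poly_mapping_eqI)
  fix k
  have "lk (ee a * F) (k + a) = lk (ee a * G) (k + a)" using assms by simp
  then show "lk F k = lk G k" by (simp add: lookup_ee_mult)
qed

lemma conv_lookup:
  fixes F G :: "'a::ab_group_add fs"
  shows "conv (lk F) (lk G) = lk (F * G)"
  by (rule ext) (simp add: conv_def fsupp_def lookup_mult_grp Poly_Mapping.keys.rep_eq)

lemma fsupp_lookup: "fsupp (lk F) = ks F"
  by (simp add: fsupp_def Poly_Mapping.keys.rep_eq)

lemma finite_fsupp_abs: "finite (fsupp f) \<Longrightarrow> lk (Abs_poly_mapping f) = f"
  unfolding fsupp_def by simp


context RS begin

definition pre :: "('a \<Rightarrow> 'a) \<Rightarrow> 'a fs \<Rightarrow> 'a fs" where
  "pre w F = Abs_poly_mapping (\<lambda>x. lk F (w x))"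

lemma lk_pre: assumes w: "w \<in> W" shows "lk (pre w F) x = lk F (w x)"
proof -
  have fin: "finite (w -` {y. lk F y \<noteq> 0})" by (rule finite_vimageI) (simp_all add: W_inj[OF w])
  have "{x. lk F (w x) \<noteq> 0} = w -` {y. lk F y \<noteq> 0}" by auto
  then have "finite {x. lk F (w x) \<noteq> 0}" using fin by metis
  then show ?thesis unfolding pre_def by simp
qed

lemma ks_pre: assumes w: "w \<in> W" shows "ks (pre w F) = w -` ks F"
  by (auto simp: in_keys_iff lk_pre[OF w])

lemma pre_mult: assumes w: "w \<in> W" shows "pre w (F * G) = pre w F * pre w G"
proof (rule poly_mapping_eqI)
  fix x
  have bij: "bij_betw w (w -` ks F) (ks F)"
    using W_bij[OF w] by (auto simp: bij_betw_def bij_def inj_on_def intro: inj_onI dest: injD)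
  have "lk (pre w F * pre w G) x = (\<Sum>l\<in>w -` ks F. lk F (w l) * lk G (w x - w l))"
    by (simp add: lookup_mult_grp ks_pre[OF w] lk_pre[OF w] W_diff[OF w])
  also have "\<dots> = (\<Sum>m\<in>ks F. lk F m * lk G (w x - m))"
    using sum.reindex_bij_betw[OF bij, of "\<lambda>m. lk F m * lk G (w x - m)"] by simp
  also have "\<dots> = lk (pre w (F * G)) x"
    by (simp add: lookup_mult_grp lk_pre[OF w])
  finally show "lk (pre w (F * G)) x = lk (pre w F * pre w G) x" ..
qed

lemma pre_add: "w \<in> W \<Longrightarrow> pre w (F + G) = pre w F + pre w G"
  by (rule poly_mapping_eqI) (simp add: lk_pre lookup_add)
lemma pre_diff: "w \<in> W \<Longrightarrow> pre w (F - G) = pre w F - pre w G"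
  by (rule poly_mapping_eqI) (simp add: lk_pre lookup_minus)
lemma pre_of_int: assumes w: "w \<in> W" shows "pre w (of_int s) = of_int s"
proof (rule poly_mapping_eqI)
  fix x
  have "w x = 0 \<longleftrightarrow> x = 0" using W_inj[OF w] W_zero[OF w] by (metis injD)
  then show "lk (pre w (of_int s)) x = lk (of_int s) x" by (simp add: lk_pre[OF w] lookup_of_int)
qed
lemma pre_one: "w \<in> W \<Longrightarrow> pre w 1 = 1"
  using pre_of_int[of w 1] by simp
lemma pre_ee: assumes w: "w \<in> W" shows "pre w (ee a) = ee (inv w a)"
proof (rule poly_mapping_eqI)
  fix x
  have eq: "(a = w x) = (inv w a = x)" using w by (metis W_inv_l W_inv_r)
  have "lk (pre w (ee a)) x = (if a = w x then 1 else 0)" by (simp add: lk_pre[OF w] lookup_ee)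
  also have "\<dots> = (if inv w a = x then 1 else 0)" using eq by simp
  also have "\<dots> = lk (ee (inv w a)) x" by (simp add: lookup_ee)
  finally show "lk (pre w (ee a)) x = lk (ee (inv w a)) x" .
qed
lemma pre_prod: assumes w: "w \<in> W" shows "pre w (\<Prod>a\<in>A. f a) = (\<Prod>a\<in>A. pre w (f a))"
proof (induction A rule: infinite_finite_induct)
  case (infinite A) then show ?case using pre_one[OF w] by simp
next
  case empty then show ?case using pre_one[OF w] by simp
next
  case (insert a A) then show ?case by (simp add: pre_mult[OF w])
qed
lemma pre_sum: assumes w: "w \<in> W" shows "pre w (\<Sum>a\<in>A. f a) = (\<Sum>a\<in>A. pre w (f a))"
  by (rule poly_mapping_eqI) (simp add: lk_pre[OF w] lookup_sum)
lemma pre_comp: "w \<in> W \<Longrightarrow> u \<in> W \<Longrightarrow> pre (w \<circ> u) F = pre u (pre w F)"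
  by (rule poly_mapping_eqI) (simp add: lk_pre W_comp)
lemma pre_id: "pre id F = F"
  by (rule poly_mapping_eqI) (simp add: lk_pre weyl_group.id_in)

subsection \<open>Alternants\<close>

definition alt :: "'a \<Rightarrow> 'a fs" where
  "alt \<mu> = (\<Sum>w\<in>W. Poly_Mapping.single (w \<mu>) (wsign P w))"

lemma lk_alt: "lk (alt \<mu>) \<nu> = alternant R P \<mu> \<nu>"
  unfolding alt_def alternant_def lookup_sum by (intro sum.cong) (auto simp: lookup_single when_def)

lemma comp_bij: assumes w: "w \<in> W" shows "bij_betw (\<lambda>u. w \<circ> u) W W"
proof (rule bij_betw_byWitness[where f' = "\<lambda>u. inv w \<circ> u"])
  show "\<forall>u\<in>W. inv w \<circ> (w \<circ> u) = u" using W_inv[OF w] by (simp add: comp_assoc[symmetric])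
  show "\<forall>u\<in>W. w \<circ> (inv w \<circ> u) = u" using W_inv[OF w] by (simp add: comp_assoc[symmetric])
  show "(\<lambda>u. w \<circ> u) ` W \<subseteq> W" using W_comp[OF w] by auto
  show "(\<lambda>u. inv w \<circ> u) ` W \<subseteq> W" using W_comp[OF W_inv_in[OF w]] by auto
qed

lemma alternant_W: assumes w: "w \<in> W"
  shows "alternant R P \<mu> (w x) = wsign P w * alternant R P \<mu> x"
proof -
  have "alternant R P \<mu> (w x) = (\<Sum>u\<in>W. if (w \<circ> u) \<mu> = w x then wsign P (w \<circ> u) else 0)"
    unfolding alternant_def
    using sum.reindex_bij_betw[OF comp_bij[OF w], of "\<lambda>u. if u \<mu> = w x then wsign P u else 0"]
    by simp
  also have "\<dots> = (\<Sum>u\<in>W. wsign P w * (if u \<mu> = x then wsign P u else 0))"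
  proof (rule sum.cong)
    fix u assume u: "u \<in> W"
    have "((w \<circ> u) \<mu> = w x) = (u \<mu> = x)" using W_inj[OF w] by (auto dest: injD)
    then show "(if (w \<circ> u) \<mu> = w x then wsign P (w \<circ> u) else 0) = wsign P w * (if u \<mu> = x then wsign P u else 0)"
      using wsign_mult[OF w u] by simp
  qed simp
  also have "\<dots> = wsign P w * alternant R P \<mu> x"
    unfolding alternant_def by (simp add: sum_distrib_left)
  finally show ?thesis .
qed

definition anti :: "'a fs \<Rightarrow> bool" where
  "anti F \<longleftrightarrow> (\<forall>w\<in>W. pre w F = of_int (wsign P w) * F)"
definition invar :: "'a fs \<Rightarrow> bool" where
  "invar F \<longleftrightarrow> (\<forall>w\<in>W. pre w F = F)"

lemma anti_iff: "anti F \<longleftrightarrow> (\<forall>w\<in>W. \<forall>x. lk F (w x) = wsign P w * lk F x)"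
proof
  assume "anti F"
  then show "\<forall>w\<in>W. \<forall>x. lk F (w x) = wsign P w * lk F x"
    unfolding anti_def by (metis lk_pre lookup_of_int_mult)
next
  assume a: "\<forall>w\<in>W. \<forall>x. lk F (w x) = wsign P w * lk F x"
  show "anti F" unfolding anti_def
  proof
    fix w assume w: "w \<in> W"
    show "pre w F = of_int (wsign P w) * F"
      by (rule poly_mapping_eqI) (simp add: lk_pre[OF w] lookup_of_int_mult a w)
  qed
qed

lemma alt_anti: "anti (alt \<mu>)"
  unfolding anti_iff lk_alt using alternant_W by blast

lemma anti_lk: "anti F \<Longrightarrow> w \<in> W \<Longrightarrow> lk F (w x) = wsign P w * lk F x"
  unfolding anti_iff by blast

lemma anti_fix_zero: assumes F: "anti F" and a: "\<alpha> \<in> R" and x: "refl \<alpha> x = x"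
  shows "lk F x = 0"
proof -
  have "lk F x = lk F (refl \<alpha> x)" using x by simp
  also have "\<dots> = - lk F x" using anti_lk[OF F W_refl[OF a]] wsign_refl[OF a] by simp
  finally show ?thesis by simp
qed

lemma invar_anti_mult: assumes "invar F" "anti G" shows "anti (F * G)"
  unfolding anti_def
proof
  fix w assume w: "w \<in> W"
  have "pre w (F * G) = pre w F * pre w G" by (rule pre_mult[OF w])
  also have "\<dots> = F * (of_int (wsign P w) * G)" using assms w unfolding invar_def anti_def by simp
  finally show "pre w (F * G) = of_int (wsign P w) * (F * G)" by (simp add: algebra_simps)
qed

lemma stab_sdom: assumes x: "sdom x" and w: "w \<in> W" and e: "w x = x" shows "w = id"
  using sdom_unique[OF w x] e x by simp

lemma alternant_sdom: assumes x: "sdom x" and x': "sdom x'" and w0: "w0 \<in> W"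
  shows "alternant R P x (w0 x') = (if x = x' then wsign P w0 else 0)"
proof -
  have "alternant R P x x' = (if x = x' then 1 else 0)"
  proof (cases "x = x'")
    case True
    have "alternant R P x x' = (\<Sum>w\<in>W. if w = id then 1 else 0)"
      unfolding alternant_def
    proof (rule sum.cong)
      fix w assume w: "w \<in> W"
      have "(w x = x') = (w = id)" using stab_sdom[OF x w] True by auto
      then show "(if w x = x' then wsign P w else 0) = (if w = id then 1 else 0)"
        using wsign_id by simp
    qed simp
    also have "\<dots> = 1" using W_finite weyl_group.id_in by simp
    finally show ?thesis using True by simp
  next
    case False
    have "\<forall>w\<in>W. w x \<noteq> x'"
    proof (intro ballI notI)
      fix w assume w: "w \<in> W" and e: "w x = x'"
      then have "w = id" using sdom_unique[OF w x] x' by simp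
      then show False using e False by simp
    qed
    then show ?thesis unfolding alternant_def using False by simp
  qed
  then show ?thesis using alternant_W[OF w0] by simp
qed

lemma anti_decomp: assumes F: "anti F"
  shows "F = (\<Sum>x\<in>{x\<in>ks F. sdom x}. of_int (lk F x) * alt x)"
proof (rule poly_mapping_eqI)
  fix y
  let ?K = "{x\<in>ks F. sdom x}"
  have rhs: "lk (\<Sum>x\<in>?K. of_int (lk F x) * alt x) y = (\<Sum>x\<in>?K. lk F x * alternant R P x y)"
    by (simp add: lookup_sum lookup_of_int_mult lk_alt)
  show "lk F y = lk (\<Sum>x\<in>?K. of_int (lk F x) * alt x) y"
  proof (cases "\<exists>x0\<in>?K. \<exists>w0\<in>W. w0 x0 = y")
    case True
    then obtain x0 w0 where x0: "x0 \<in> ?K" and w0: "w0 \<in> W" "w0 x0 = y" by blast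
    have "(\<Sum>x\<in>?K. lk F x * alternant R P x y) = (\<Sum>x\<in>?K. if x = x0 then lk F x * wsign P w0 else 0)"
    proof (rule sum.cong)
      fix x assume x: "x \<in> ?K"
      show "lk F x * alternant R P x y = (if x = x0 then lk F x * wsign P w0 else 0)"
        using alternant_sdom[of x x0 w0] x x0 w0 by auto
    qed simp
    also have "\<dots> = lk F x0 * wsign P w0" using x0 by simp
    also have "\<dots> = lk F y" using anti_lk[OF F w0(1), of x0] w0(2) by (simp add: mult.commute)
    finally show ?thesis using rhs by simp
  next
    case False
    have "(\<Sum>x\<in>?K. lk F x * alternant R P x y) = 0"
    proof (rule sum.neutral, rule ballI)
      fix x assume x: "x \<in> ?K"
      have "alternant R P x y = 0" unfolding alternant_def using False x by (intro sum.neutral) auto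
      then show "lk F x * alternant R P x y = 0" by simp
    qed
    moreover have "lk F y = 0"
    proof (rule ccontr)
      assume ne: "lk F y \<noteq> 0"
      obtain w where w: "w \<in> W" "\<forall>\<alpha>\<in>P. w y \<bullet> \<alpha> \<ge> 0" using dom_rep by blast
      have Fz: "lk F (w y) \<noteq> 0" using anti_lk[OF F w(1)] ne wsign_pm[of w] by auto
      show False
      proof (cases "sdom (w y)")
        case True
        then have "w y \<in> ?K" using Fz by (simp add: in_keys_iff)
        moreover have "inv w (w y) = y" using w(1) by simp
        ultimately show False using False W_inv_in[OF w(1)] by blast
      next
        case nsd: False
        then obtain \<alpha> where a: "\<alpha> \<in> P" "w y \<bullet> \<alpha> \<le> 0" unfolding sdom_def by (auto simp: not_less)
        then have "w y \<bullet> \<alpha> = 0" using w(2) by (simp add: antisym)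
        then have "refl \<alpha> (w y) = w y" using refl_fix_iff P_nz[OF a(1)] by blast
        then have "lk F (w y) = 0" using anti_fix_zero[OF F P_R[OF a(1)]] by blast
        then show False using Fz by simp
      qed
    qed
    ultimately show ?thesis using rhs by simp
  qed
qed

subsection \<open>Cancellation of the Weyl denominator\<close>

lemma alternant_rho_rho: "alternant R P \<rho> \<rho> = 1"
proof -
  have "alternant R P \<rho> \<rho> = (\<Sum>w\<in>W. if w = id then 1 else 0)"
    unfolding alternant_def
  proof (rule sum.cong)
    fix w assume w: "w \<in> W"
    have "(w \<rho> = \<rho>) = (w = id)" using stab_rho[OF w] by auto
    then show "(if w \<rho> = \<rho> then wsign P w else 0) = (if w = id then 1 else 0)"
      using wsign_id by simp
  qed simp
  also have "\<dots> = 1" using W_finite weyl_group.id_in by simp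
  finally show ?thesis .
qed

lemma alternant_nz: assumes "alternant R P \<mu> z \<noteq> 0" shows "\<exists>w\<in>W. w \<mu> = z"
proof (rule ccontr)
  assume "\<not> ?thesis"
  then have "\<forall>w\<in>W. (if w \<mu> = z then wsign P w else 0) = 0" by auto
  then have "alternant R P \<mu> z = 0" unfolding alternant_def by (rule sum.neutral)
  then show False using assms by simp
qed

lemma alternant_rho_nz: "alternant R P \<rho> z \<noteq> 0 \<Longrightarrow> \<exists>w\<in>W. w \<rho> = z"
  by (rule alternant_nz)

lemma W_rho_inner: assumes w: "w \<in> W" and ge: "w \<rho> \<bullet> \<rho> \<ge> \<rho> \<bullet> \<rho>" shows "w \<rho> = \<rho>"
proof -
  have "(w \<rho> - \<rho>) \<bullet> (w \<rho> - \<rho>) = w \<rho> \<bullet> w \<rho> - 2 * (w \<rho> \<bullet> \<rho>) + \<rho> \<bullet> \<rho>"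
    by (simp add: inner_diff_left inner_diff_right inner_commute)
  also have "w \<rho> \<bullet> w \<rho> = \<rho> \<bullet> \<rho>" by (rule W_orth[OF w])
  finally have "(w \<rho> - \<rho>) \<bullet> (w \<rho> - \<rho>) \<le> 0" using ge by simp
  then show ?thesis by (metis antisym inner_ge_zero inner_eq_zero_iff right_minus_eq)
qed

lemma alt_rho_zero_divisor: assumes h: "alt \<rho> * H = 0" shows "H = 0"
proof (rule ccontr)
  assume "H \<noteq> 0"
  then have ne: "ks H \<noteq> {}" by simp
  define M where "M = Max ((\<lambda>l. l \<bullet> \<rho>) ` ks H)"
  have "M \<in> (\<lambda>l. l \<bullet> \<rho>) ` ks H" unfolding M_def using ne by (intro Max_in) auto
  then obtain m where m: "m \<in> ks H" "m \<bullet> \<rho> = M" by blast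
  have le: "l \<bullet> \<rho> \<le> m \<bullet> \<rho>" if "l \<in> ks H" for l
  proof -
    have "l \<bullet> \<rho> \<le> M" unfolding M_def by (rule Max_ge) (use that in auto)
    then show ?thesis using m(2) by simp
  qed
  have "lk (H * alt \<rho>) (m + \<rho>) = (\<Sum>l\<in>ks H. lk H l * alternant R P \<rho> (m + \<rho> - l))"
    by (simp add: lookup_mult_grp lk_alt)
  also have "\<dots> = (\<Sum>l\<in>ks H. if l = m then lk H l else 0)"
  proof (rule sum.cong)
    fix l assume l: "l \<in> ks H"
    show "lk H l * alternant R P \<rho> (m + \<rho> - l) = (if l = m then lk H l else 0)"
    proof (cases "l = m")
      case True then show ?thesis using alternant_rho_rho by simp
    next
      case False
      have "alternant R P \<rho> (m + \<rho> - l) = 0"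
      proof (rule ccontr)
        assume "alternant R P \<rho> (m + \<rho> - l) \<noteq> 0"
        then obtain w where w: "w \<in> W" "w \<rho> = m + \<rho> - l" using alternant_rho_nz by blast
        have "w \<rho> \<bullet> \<rho> = m \<bullet> \<rho> - l \<bullet> \<rho> + \<rho> \<bullet> \<rho>"
          using w(2) by (simp add: inner_diff_left inner_add_left)
        then have "w \<rho> \<bullet> \<rho> \<ge> \<rho> \<bullet> \<rho>" using le[OF l] by simp
        then have "w \<rho> = \<rho>" by (rule W_rho_inner[OF w(1)])
        then show False using w(2) False by simp
      qed
      then show ?thesis using False by simp
    qed
  qed simp
  also have "\<dots> = lk H m" using m(1) by simp
  finally have "lk (H * alt \<rho>) (m + \<rho>) \<noteq> 0" using m(1) by (simp add: in_keys_iff)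
  then show False using h by (simp add: mult.commute)
qed

lemma alt_rho_cancel: assumes "alt \<rho> * F = alt \<rho> * G" shows "F = G"
proof -
  have "alt \<rho> * (F - G) = 0" using assms by (simp add: right_diff_distrib)
  then have "F - G = 0" by (rule alt_rho_zero_divisor)
  then show ?thesis by simp
qed

end

context RS begin

section \<open>Divisibility of anti-invariants\<close>

definition Zb :: "'a \<Rightarrow> 'a set" where "Zb \<beta> = range (\<lambda>k::int. of_int k *\<^sub>R \<beta>)"
definition Np :: "'a \<Rightarrow> 'a set" where "Np \<beta> = range (\<lambda>k::nat. of_nat k *\<^sub>R \<beta>)"

definition cs :: "'a \<Rightarrow> 'a fs \<Rightarrow> 'a \<Rightarrow> int" where
  "cs \<beta> F x = (\<Sum>y\<in>{y\<in>ks F. y - x \<in> Zb \<beta>}. lk F y)"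

lemma cs_superset: assumes "finite A" "ks F \<subseteq> A"
  shows "cs \<beta> F x = (\<Sum>y\<in>{y\<in>A. y - x \<in> Zb \<beta>}. lk F y)"
  unfolding cs_def
  by (rule sum.mono_neutral_left) (use assms in \<open>auto simp: in_keys_iff\<close>)

lemma Zb_diff: "a \<in> Zb \<beta> \<Longrightarrow> b \<in> Zb \<beta> \<Longrightarrow> a - b \<in> Zb \<beta>"
proof -
  assume "a \<in> Zb \<beta>" "b \<in> Zb \<beta>"
  then obtain i j :: int where "a = of_int i *\<^sub>R \<beta>" "b = of_int j *\<^sub>R \<beta>" unfolding Zb_def by blast
  then have "a - b = of_int (i - j) *\<^sub>R \<beta>" by (simp add: scaleR_diff_left)
  then show ?thesis unfolding Zb_def by blast
qed

lemma cs_anti: assumes F: "anti F" and FL: "ks F \<subseteq> L" and b: "\<beta> \<in> R"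
  shows "cs \<beta> F x = 0"
proof -
  let ?S = "{y\<in>ks F. y - x \<in> Zb \<beta>}"
  have b0: "\<beta> \<noteq> 0" using R_nz b by auto
  have rr: "refl \<beta> (refl \<beta> y) = y" for y using refl_refl[OF b0] .
  have neg: "lk F (refl \<beta> y) = - lk F y" for y
    using anti_lk[OF F W_refl[OF b]] wsign_refl[OF b] by simp
  have into: "refl \<beta> y \<in> ?S" if y: "y \<in> ?S" for y
  proof -
    have yL: "y \<in> L" using y FL by auto
    then have "cp y \<beta> \<in> \<int>" using b unfolding L_iff by blast
    then obtain c :: int where c: "cp y \<beta> = of_int c" by (metis Ints_cases)
    have "cp y \<beta> *\<^sub>R \<beta> \<in> Zb \<beta>" unfolding Zb_def c by blast
    then have "(y - x) - cp y \<beta> *\<^sub>R \<beta> \<in> Zb \<beta>" using y Zb_diff by blast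
    moreover have "(y - x) - cp y \<beta> *\<^sub>R \<beta> = refl \<beta> y - x" by (simp add: refl_cp algebra_simps)
    moreover have "lk F (refl \<beta> y) \<noteq> 0" using neg y by (simp add: in_keys_iff)
    ultimately show ?thesis by (simp add: in_keys_iff)
  qed
  have bij: "bij_betw (refl \<beta>) ?S ?S"
    by (rule bij_betw_byWitness[where f' = "refl \<beta>"]) (use into rr in auto)
  have "(\<Sum>y\<in>?S. lk F y) = (\<Sum>y\<in>?S. lk F (refl \<beta> y))"
    using sum.reindex_bij_betw[OF bij, of "lk F"] by simp
  also have "\<dots> = - (\<Sum>y\<in>?S. lk F y)" by (simp add: neg sum_negf)
  finally show ?thesis unfolding cs_def by simp
qed

lemma lk_one_minus_ee:
  "lk ((1 - ee (- \<alpha>)) * H) y = lk H y - lk H (y + (\<alpha>::'a))"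
proof -
  have e: "lk (ee (- \<alpha>) * H) y = lk H (y - (- \<alpha>))" by (rule lookup_ee_mult)
  show ?thesis by (simp add: left_diff_distrib lookup_minus e)
qed

lemma cs_shift: "cs \<beta> ((1 - ee (- \<alpha>)) * H) x = cs \<beta> H x - cs \<beta> H (x + \<alpha>)"
proof -
  let ?A = "ks H \<union> (\<lambda>z. z - \<alpha>) ` ks H"
  have finA: "finite ?A" by simp
  have sub: "ks ((1 - ee (- \<alpha>)) * H) \<subseteq> ?A"
  proof
    fix y assume "y \<in> ks ((1 - ee (- \<alpha>)) * H)"
    then have "lk H y \<noteq> 0 \<or> lk H (y + \<alpha>) \<noteq> 0" by (auto simp: in_keys_iff lk_one_minus_ee)
    then show "y \<in> ?A"
    proof
      assume "lk H (y + \<alpha>) \<noteq> 0"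
      then have "y + \<alpha> \<in> ks H" by (simp add: in_keys_iff)
      moreover have "y = (y + \<alpha>) - \<alpha>" by simp
      ultimately show ?thesis by blast
    qed (simp add: in_keys_iff)
  qed
  let ?S = "{y\<in>?A. y - x \<in> Zb \<beta>}"
  have "cs \<beta> ((1 - ee (- \<alpha>)) * H) x = (\<Sum>y\<in>?S. lk H y - lk H (y + \<alpha>))"
    by (simp add: cs_superset[OF finA sub] lk_one_minus_ee)
  also have "\<dots> = (\<Sum>y\<in>?S. lk H y) - (\<Sum>y\<in>?S. lk H (y + \<alpha>))"
    by (rule sum_subtractf)
  also have "(\<Sum>y\<in>?S. lk H y) = cs \<beta> H x"
    by (rule cs_superset[symmetric]) auto
  also have "(\<Sum>y\<in>?S. lk H (y + \<alpha>)) = cs \<beta> H (x + \<alpha>)"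
  proof -
    let ?h = "\<lambda>y. y + \<alpha>"
    have inj: "inj_on ?h ?S" by (auto intro: inj_onI)
    have img: "?h ` ?S = {z\<in>?h ` ?A. z - (x + \<alpha>) \<in> Zb \<beta>}"
    proof (rule set_eqI, rule iffI)
      fix z assume "z \<in> ?h ` ?S"
      then obtain y where "y \<in> ?S" "z = y + \<alpha>" by blast
      then show "z \<in> {z\<in>?h ` ?A. z - (x + \<alpha>) \<in> Zb \<beta>}" by auto
    next
      fix z assume z: "z \<in> {z\<in>?h ` ?A. z - (x + \<alpha>) \<in> Zb \<beta>}"
      then obtain y where y: "y \<in> ?A" "z = y + \<alpha>" by blast
      then have "y - x \<in> Zb \<beta>" using z by (simp add: algebra_simps)
      then show "z \<in> ?h ` ?S" using y by blast
    qed
    have sub2: "ks H \<subseteq> ?h ` ?A"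
    proof
      fix z assume "z \<in> ks H"
      then have "z - \<alpha> \<in> ?A" by blast
      then show "z \<in> ?h ` ?A" by (metis (no_types, lifting) diff_add_cancel imageI)
    qed
    have "(\<Sum>y\<in>?S. lk H (y + \<alpha>)) = (\<Sum>z\<in>?h ` ?S. lk H z)"
      by (rule sum.reindex[OF inj, symmetric, unfolded comp_def])
    also have "\<dots> = cs \<beta> H (x + \<alpha>)" unfolding img
      by (rule cs_superset[symmetric]) (use sub2 in auto)
    finally show ?thesis .
  qed
  finally show ?thesis .
qed

lemma cs_cancel: assumes a: "\<alpha> \<in> P" and b: "\<beta> \<in> P" and ne: "\<alpha> \<noteq> \<beta>"
  and z: "\<And>x. cs \<beta> ((1 - ee (- \<alpha>)) * H) x = 0"
  shows "cs \<beta> H x = 0"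
proof (rule ccontr)
  assume sx: "cs \<beta> H x \<noteq> 0"
  have per: "cs \<beta> H y = cs \<beta> H (y + \<alpha>)" for y using z[of y] cs_shift by simp
  have pern: "cs \<beta> H x = cs \<beta> H (x + of_nat n *\<^sub>R \<alpha>)" for n
  proof (induction n)
    case 0 then show ?case by simp
  next
    case (Suc n)
    then show ?case using per[of "x + of_nat n *\<^sub>R \<alpha>"] by (simp add: algebra_simps)
  qed
  have ex: "\<exists>y. y \<in> ks H \<and> y - (x + of_nat n *\<^sub>R \<alpha>) \<in> Zb \<beta>" for n
  proof (rule ccontr)
    assume "\<not> ?thesis"
    then have e: "{y\<in>ks H. y - (x + of_nat n *\<^sub>R \<alpha>) \<in> Zb \<beta>} = {}" by blast
    have "cs \<beta> H (x + of_nat n *\<^sub>R \<alpha>) = 0" unfolding cs_def by (simp only: e sum.empty)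
    then show False using pern sx by simp
  qed
  define f where "f n = (SOME y. y \<in> ks H \<and> y - (x + of_nat n *\<^sub>R \<alpha>) \<in> Zb \<beta>)" for n
  have f: "f n \<in> ks H \<and> f n - (x + of_nat n *\<^sub>R \<alpha>) \<in> Zb \<beta>" for n
    unfolding f_def by (rule someI_ex[OF ex])
  have "\<not> inj f"
  proof
    assume "inj f"
    moreover have "finite (range f)" using f by (meson finite_keys finite_subset image_subsetI)
    ultimately have "finite (UNIV :: nat set)" using finite_imageD by blast
    then show False by simp
  qed
  then obtain n m where nm: "n \<noteq> m" "f n = f m" unfolding inj_def by blast
  obtain i j :: int where ij: "f n - (x + of_nat n *\<^sub>R \<alpha>) = of_int i *\<^sub>R \<beta>"
    "f m - (x + of_nat m *\<^sub>R \<alpha>) = of_int j *\<^sub>R \<beta>" using f[of n] f[of m] unfolding Zb_def by blast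
  have "(real m - real n) *\<^sub>R \<alpha> = (of_int i - of_int j) *\<^sub>R \<beta>"
    using ij nm(2) by (simp add: algebra_simps)
  moreover have t: "real m - real n \<noteq> 0" using nm(1) by simp
  ultimately have "\<alpha> = ((of_int i - of_int j) / (real m - real n)) *\<^sub>R \<beta>"
    by (metis (no_types, lifting) divide_inverse_commute eq_vector_fraction_iff)
  moreover have "\<alpha> \<in> R" "\<beta> \<in> R" using a b P_R by auto
  ultimately have "(of_int i - of_int j) / (real m - real n) = 1 \<or> (of_int i - of_int j) / (real m - real n) = -1"
    using reduced by metis
  then have "\<alpha> = \<beta> \<or> \<alpha> = - \<beta>" using \<open>\<alpha> = _\<close> by auto
  then show False using ne a P_neg[OF b] by auto
qed

lemma cs_divide: assumes z: "\<And>x. cs \<beta> G x = 0" and b0: "\<beta> \<noteq> 0"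
  and GL: "ks G \<subseteq> L" and bL: "\<beta> \<in> L"
  shows "\<exists>G'. G = (1 - ee (- \<beta>)) * G' \<and> ks G' \<subseteq> L"
proof -
  define g where "g y = (\<Sum>z\<in>{z\<in>ks G. z - y \<in> Np \<beta>}. lk G z)" for y
  define D where "D = (\<Sum>p\<in>ks G \<times> ks G. norm (fst p - snd p))"
  define N where "N = nat \<lceil>D / norm \<beta>\<rceil>"
  define B where "B = (\<lambda>p. fst p - of_nat (snd p) *\<^sub>R \<beta>) ` (ks G \<times> {..N})"
  have nb: "norm \<beta> > 0" using b0 by simp
  have supp: "{y. g y \<noteq> 0} \<subseteq> B"
  proof
    fix y assume "y \<in> {y. g y \<noteq> 0}"
    then have gy: "g y \<noteq> 0" by simp
    then obtain z where "z \<in> {z\<in>ks G. z - y \<in> Np \<beta>}" unfolding g_def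
      by (meson sum.not_neutral_contains_not_neutral)
    then have z1: "z \<in> ks G" "z - y \<in> Np \<beta>" by auto
    obtain k :: nat where k: "z - y = of_nat k *\<^sub>R \<beta>" using z1(2) unfolding Np_def by blast
    let ?Z = "{z\<in>ks G. z - y \<in> Zb \<beta>}"
    let ?Z1 = "{z\<in>ks G. z - y \<in> Np \<beta>}"
    let ?Z2 = "{z\<in>ks G. z - y \<in> Zb \<beta> \<and> z - y \<notin> Np \<beta>}"
    have NZ: "Np \<beta> \<subseteq> Zb \<beta>" unfolding Np_def Zb_def
    proof
      fix u assume "u \<in> range (\<lambda>k::nat. of_nat k *\<^sub>R \<beta>)"
      then obtain k :: nat where "u = of_nat k *\<^sub>R \<beta>" by blast
      then have "u = of_int (int k) *\<^sub>R \<beta>" by simp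
      then show "u \<in> range (\<lambda>k::int. of_int k *\<^sub>R \<beta>)" by blast
    qed
    have "?Z = ?Z1 \<union> ?Z2" using NZ by auto
    moreover have "?Z1 \<inter> ?Z2 = {}" by auto
    ultimately have "cs \<beta> G y = g y + (\<Sum>z\<in>?Z2. lk G z)"
      unfolding cs_def g_def by (simp add: sum.union_disjoint)
    then have "(\<Sum>z\<in>?Z2. lk G z) \<noteq> 0" using z[of y] gy by simp
    then obtain z' where "z' \<in> ?Z2"
      by (meson sum.not_neutral_contains_not_neutral)
    then have z2: "z' \<in> ks G" "z' - y \<in> Zb \<beta>" "z' - y \<notin> Np \<beta>" by auto
    obtain j :: int where j: "z' - y = of_int j *\<^sub>R \<beta>" using z2(2) unfolding Zb_def by blast
    have jneg: "j < 0"
    proof (rule ccontr)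
      assume "\<not> j < 0"
      then have "z' - y = of_nat (nat j) *\<^sub>R \<beta>" using j by simp
      then show False using z2(3) unfolding Np_def by blast
    qed
    have "z - z' = (of_nat k - of_int j) *\<^sub>R \<beta>" using k j by (simp add: algebra_simps)
    then have "norm (z - z') = \<bar>of_nat k - of_int j\<bar> * norm \<beta>" by simp
    also have "\<bar>of_nat k - of_int j\<bar> = (of_nat k - of_int j :: real)" using jneg by simp
    finally have nzz: "norm (z - z') = (of_nat k - of_int j) * norm \<beta>" .
    have "(- of_int j) * norm \<beta> \<ge> 0" using jneg nb by (intro mult_nonneg_nonneg) auto
    then have nz: "norm (z - z') \<ge> of_nat k * norm \<beta>" unfolding nzz by (simp add: left_diff_distrib)
    have "norm (z - z') \<le> D" unfolding D_def
      using member_le_sum[of "(z, z')" "ks G \<times> ks G" "\<lambda>p. norm (fst p - snd p)"] z1 z2 by simp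
    then have "of_nat k * norm \<beta> \<le> D" using nz by simp
    then have "of_nat k \<le> D / norm \<beta>" using nb by (simp add: field_simps)
    then have "k \<le> N" unfolding N_def by linarith
    moreover have "y = z - of_nat k *\<^sub>R \<beta>" using k by (simp add: algebra_simps)
    ultimately show "y \<in> B" unfolding B_def using z1(1) by force
  qed
  have finB: "finite B" unfolding B_def by simp
  then have fing: "finite {y. g y \<noteq> 0}" using supp finite_subset by blast
  define G' where "G' = Abs_poly_mapping g"
  have lkG': "lk G' = g" unfolding G'_def using fing by simp
  have rec: "g y = lk G y + g (y + \<beta>)" for y
  proof -
    let ?Aa = "{z\<in>ks G. z - y \<in> Np \<beta>}"
    let ?Az = "{z\<in>ks G. z = y}"
    let ?Ao = "{z\<in>ks G. z - (y + \<beta>) \<in> Np \<beta>}"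
    have "?Aa = ?Az \<union> ?Ao"
    proof (rule set_eqI, rule iffI)
      fix z assume "z \<in> ?Aa"
      then obtain k :: nat where zk: "z \<in> ks G" "z - y = of_nat k *\<^sub>R \<beta>" unfolding Np_def by blast
      show "z \<in> ?Az \<union> ?Ao"
      proof (cases k)
        case 0 then show ?thesis using zk by simp
      next
        case (Suc k')
        then have "z - (y + \<beta>) = of_nat k' *\<^sub>R \<beta>" using zk by (simp add: algebra_simps)
        then show ?thesis using zk unfolding Np_def by blast
      qed
    next
      fix z assume "z \<in> ?Az \<union> ?Ao"
      then show "z \<in> ?Aa"
      proof
        assume "z \<in> ?Az" then show ?thesis unfolding Np_def by (auto intro: range_eqI[of _ _ 0])
      next
        assume "z \<in> ?Ao"
        then obtain k :: nat where zk: "z \<in> ks G" "z - (y + \<beta>) = of_nat k *\<^sub>R \<beta>" unfolding Np_def by blast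
        then have "z - y = of_nat (Suc k) *\<^sub>R \<beta>" by (simp add: algebra_simps)
        then show ?thesis using zk unfolding Np_def by blast
      qed
    qed
    moreover have "?Az \<inter> ?Ao = {}"
    proof (rule ccontr)
      assume "?Az \<inter> ?Ao \<noteq> {}"
      then obtain z where zz: "z \<in> ?Az" "z \<in> ?Ao" by blast
      then have "- \<beta> \<in> Np \<beta>" by simp
      then obtain k :: nat where kk: "- \<beta> = of_nat k *\<^sub>R \<beta>" unfolding Np_def by blast
      have "(of_nat k + 1) *\<^sub>R \<beta> = of_nat k *\<^sub>R \<beta> + \<beta>" by (simp add: scaleR_add_left)
      also have "\<dots> = - \<beta> + \<beta>" using kk by simp
      finally have "(of_nat k + 1) *\<^sub>R \<beta> = 0" by simp
      then show False using b0 by simp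
    qed
    ultimately have "g y = (\<Sum>z\<in>?Az. lk G z) + g (y + \<beta>)"
      unfolding g_def by (simp add: sum.union_disjoint)
    moreover have "(\<Sum>z\<in>?Az. lk G z) = lk G y"
    proof (cases "y \<in> ks G")
      case True then have "?Az = {y}" by auto
      then show ?thesis by simp
    next
      case False then have "?Az = {}" by auto
      then show ?thesis using False by (simp add: in_keys_iff)
    qed
    ultimately show ?thesis by simp
  qed
  have "G = (1 - ee (- \<beta>)) * G'"
  proof (rule poly_mapping_eqI)
    fix y
    show "lk G y = lk ((1 - ee (- \<beta>)) * G') y"
      unfolding lk_one_minus_ee lkG' using rec[of y] by linarith
  qed
  moreover have "ks G' \<subseteq> L"
  proof
    fix y assume "y \<in> ks G'"
    then have "y \<in> B" using supp lkG' by (auto simp: in_keys_iff)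
    then obtain p where p: "p \<in> ks G \<times> {..N}" "y = fst p - of_nat (snd p) *\<^sub>R \<beta>" unfolding B_def by blast
    then obtain z k where "z \<in> ks G" "y = z - of_nat k *\<^sub>R \<beta>" by (metis mem_Sigma_iff prod.collapse)
    then show "y \<in> L" using GL bL by (auto intro: L_diff L_nat)
  qed
  ultimately show ?thesis by blast
qed

definition Q :: "'a set \<Rightarrow> 'a fs" where "Q T = (\<Prod>\<alpha>\<in>T. 1 - ee (- \<alpha>))"

lemma Q_insert: "finite T \<Longrightarrow> a \<notin> T \<Longrightarrow> Q (insert a T) = (1 - ee (- a)) * Q T"
  unfolding Q_def by simp

lemma cs_Q: assumes T: "T \<subseteq> P" and b: "\<beta> \<in> P" "\<beta> \<notin> T"
  shows "(\<And>x. cs \<beta> (Q T * H) x = 0) \<Longrightarrow> cs \<beta> H x = 0"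
proof -
  have fT: "finite T" using T finP finite_subset by blast
  show "(\<And>x. cs \<beta> (Q T * H) x = 0) \<Longrightarrow> cs \<beta> H x = 0"
    using fT T b(2)
  proof (induction T arbitrary: H x rule: finite_induct)
    case empty then show ?case by (simp add: Q_def)
  next
    case (insert a T)
    have "Q (insert a T) * H = Q T * ((1 - ee (- a)) * H)"
      unfolding Q_insert[OF insert.hyps] by (simp only: ac_simps)
    then have "cs \<beta> ((1 - ee (- a)) * H) y = 0" for y
      using insert.IH[of "(1 - ee (- a)) * H"] insert.prems by simp
    then show ?case using cs_cancel[of a \<beta> H x] insert.prems b by auto
  qed
qed

lemma anti_divisible: assumes F: "anti F" and FL: "ks F \<subseteq> L" and T: "T \<subseteq> P"
  shows "\<exists>G. F = Q T * G \<and> ks G \<subseteq> L"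
proof -
  have fT: "finite T" using T finP finite_subset by blast
  show ?thesis using fT T
  proof (induction T rule: finite_induct)
    case empty then show ?case using FL by (intro exI[of _ F]) (simp add: Q_def)
  next
    case (insert \<beta> T)
    then obtain G where G: "F = Q T * G" "ks G \<subseteq> L" by auto
    have bP: "\<beta> \<in> P" using insert.prems by auto
    have bR: "\<beta> \<in> R" using P_R bP .
    have "cs \<beta> (Q T * G) x = 0" for x using cs_anti[OF F FL bR] G(1) by simp
    then have "cs \<beta> G x = 0" for x using cs_Q[of T \<beta> G x] insert bP by auto
    then obtain G' where G': "G = (1 - ee (- \<beta>)) * G'" "ks G' \<subseteq> L"
      using cs_divide[of \<beta> G] R_nz[OF bR] G(2) R_L[OF bR] by blast
    have "F = Q (insert \<beta> T) * G'"
      unfolding G(1) G'(1) Q_insert[OF insert.hyps] by (simp only: ac_simps)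
    then show ?case using G'(2) by blast
  qed
qed

end

context RS begin

section \<open>Weyl denominator and character formula\<close>

definition hh :: "'a \<Rightarrow> 'a" where "hh \<gamma> = (1/2) *\<^sub>R \<gamma>"
definition dfac :: "'a \<Rightarrow> 'a fs" where "dfac \<gamma> = ee (hh \<gamma>) - ee (- hh \<gamma>)"
definition Dn :: "'a fs" where "Dn = ee \<rho> * Q P"

lemma dfac_eq: "dfac \<alpha> = ee (hh \<alpha>) * (1 - ee (- \<alpha>))"
proof -
  have "hh \<alpha> + - \<alpha> = - hh \<alpha>" unfolding hh_def by (simp add: algebra_simps scaleR_2[symmetric])
  then show ?thesis unfolding dfac_def by (simp add: right_diff_distrib ee_mult)
qed

lemma dfac_neg: "dfac (- \<gamma>) = - dfac \<gamma>"
  unfolding dfac_def hh_def by simp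

lemma Dn_prod: "Dn = (\<Prod>\<alpha>\<in>P. dfac \<alpha>)"
proof -
  have "(\<Prod>\<alpha>\<in>P. dfac \<alpha>) = (\<Prod>\<alpha>\<in>P. ee (hh \<alpha>)) * Q P"
    unfolding dfac_eq Q_def by (rule prod.distrib)
  also have "(\<Prod>\<alpha>\<in>P. ee (hh \<alpha>)) = ee (\<Sum>\<alpha>\<in>P. hh \<alpha>)" by (rule prod_ee[OF finP])
  also have "(\<Sum>\<alpha>\<in>P. hh \<alpha>) = \<rho>" unfolding hh_def rho_def by (simp add: scaleR_sum_right)
  finally show ?thesis unfolding Dn_def by simp
qed

lemma pre_dfac: assumes w: "w \<in> W" shows "pre w (dfac \<gamma>) = dfac (inv w \<gamma>)"
proof -
  have u: "inv w \<in> W" using W_inv_in[OF w] .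
  show ?thesis unfolding dfac_def hh_def
    by (simp add: pre_diff[OF w] pre_ee[OF w] W_scale[OF u] W_neg[OF u])
qed

lemma Dn_anti: "anti Dn"
  unfolding anti_def
proof
  fix w assume w: "w \<in> W"
  define u where "u = inv w"
  have u: "u \<in> W" unfolding u_def using W_inv_in[OF w] .
  have e1: "dfac (u \<alpha>) = (if u \<alpha> \<in> P then 1 else -1) * dfac (pos (u \<alpha>))" for \<alpha>
    by (simp add: pos_def dfac_neg)
  have "pre w Dn = (\<Prod>\<alpha>\<in>P. dfac (u \<alpha>))"
    unfolding Dn_prod pre_prod[OF w] pre_dfac[OF w] u_def ..
  also have "\<dots> = (\<Prod>\<alpha>\<in>P. (if u \<alpha> \<in> P then 1 else -1)) * (\<Prod>\<alpha>\<in>P. dfac (pos (u \<alpha>)))"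
    unfolding e1 by (rule prod.distrib)
  also have "(\<Prod>\<alpha>\<in>P. dfac (pos (u \<alpha>))) = Dn"
    unfolding Dn_prod using prod.reindex_bij_betw[OF pos_bij[OF u], of dfac] by simp
  also have "(\<Prod>\<alpha>\<in>P. (if u \<alpha> \<in> P then 1 else -1 :: 'a fs)) = of_int (\<Prod>\<alpha>\<in>P. (if u \<alpha> \<in> P then 1 else -1))"
    unfolding of_int_prod by (rule prod.cong) auto
  also have "(\<Prod>\<alpha>\<in>P. (if u \<alpha> \<in> P then 1 else -1 :: int)) = wsign P w"
    using wsign_prod[of u] wsign_inv[OF w] unfolding u_def by simp
  finally show "pre w Dn = of_int (wsign P w) * Dn" .
qed

lemma lk_Q_insert: "finite T \<Longrightarrow> \<beta> \<notin> T \<Longrightarrow> lk (Q (insert \<beta> T)) y = lk (Q T) y - lk (Q T) (y + \<beta>)"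
  by (simp add: Q_insert lk_one_minus_ee)

lemma sum_P_v: "S \<subseteq> P \<Longrightarrow> (\<Sum>a\<in>S. a) \<bullet> v \<ge> 0"
  by (simp add: inner_sum_left sum_nonneg less_imp_le P_pos subset_iff)

lemma Q_props: assumes T: "T \<subseteq> P"
  shows "(\<forall>y\<in>ks (Q T). \<exists>S\<subseteq>T. y = - (\<Sum>a\<in>S. a)) \<and> lk (Q T) 0 = 1"
proof -
  have fT: "finite T" using T finP finite_subset by blast
  show ?thesis using fT T
  proof (induction T rule: finite_induct)
    case empty then show ?case by (simp add: Q_def lookup_one)
  next
    case (insert \<beta> T)
    have IH1: "\<forall>y\<in>ks (Q T). \<exists>S\<subseteq>T. y = - (\<Sum>a\<in>S. a)" and IH2: "lk (Q T) 0 = 1"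
      using insert by auto
    have bP: "\<beta> \<in> P" using insert.prems by auto
    have keys: "\<exists>S\<subseteq>insert \<beta> T. y = - (\<Sum>a\<in>S. a)" if y: "y \<in> ks (Q (insert \<beta> T))" for y
    proof -
      have "lk (Q T) y \<noteq> 0 \<or> lk (Q T) (y + \<beta>) \<noteq> 0"
        using y lk_Q_insert[OF insert.hyps] by (auto simp: in_keys_iff)
      then show ?thesis
      proof
        assume "lk (Q T) y \<noteq> 0"
        then have "y \<in> ks (Q T)" by (simp add: in_keys_iff)
        then obtain S where "S \<subseteq> T" "y = - (\<Sum>a\<in>S. a)" using IH1 by blast
        then show ?thesis by blast
      next
        assume "lk (Q T) (y + \<beta>) \<noteq> 0"
        then have "y + \<beta> \<in> ks (Q T)" by (simp add: in_keys_iff)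
        then obtain S where S: "S \<subseteq> T" "y + \<beta> = - (\<Sum>a\<in>S. a)" using IH1 by blast
        have fS: "finite S" using S(1) insert.hyps(1) finite_subset by blast
        have nS: "\<beta> \<notin> S" using S(1) insert.hyps(2) by auto
        have "y = (y + \<beta>) - \<beta>" by simp
        also have "\<dots> = - (\<Sum>a\<in>S. a) - \<beta>" using S(2) by simp
        also have "\<dots> = - (\<Sum>a\<in>insert \<beta> S. a)" using sum.insert[OF fS nS, of "\<lambda>a. a"] by simp
        finally have "y = - (\<Sum>a\<in>insert \<beta> S. a)" .
        then show ?thesis using S(1) by blast
      qed
    qed
    have "lk (Q T) \<beta> = 0"
    proof (rule ccontr)
      assume "lk (Q T) \<beta> \<noteq> 0"
      then have "\<beta> \<in> ks (Q T)" by (simp add: in_keys_iff)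
      then obtain S where S: "S \<subseteq> T" "\<beta> = - (\<Sum>a\<in>S. a)" using IH1 by blast
      have "(\<Sum>a\<in>S. a) \<bullet> v \<ge> 0" using S(1) insert.prems by (intro sum_P_v) auto
      moreover have "\<beta> \<bullet> v > 0" using P_pos bP by auto
      ultimately show False using S(2) by simp
    qed
    then have "lk (Q (insert \<beta> T)) 0 = 1" using lk_Q_insert[OF insert.hyps] IH2 by simp
    then show ?case using keys by blast
  qed
qed

lemma lk_Dn: "lk Dn x = lk (Q P) (x - \<rho>)"
  unfolding Dn_def by (rule lookup_ee_mult)

lemma Dn_alt: "Dn = alt \<rho>"
proof -
  let ?K = "{x\<in>ks Dn. sdom x}"
  have rK: "\<rho> \<in> ?K"
    using Q_props[of P] rho_pos unfolding sdom_def by (simp add: in_keys_iff lk_Dn inner_commute)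
  have "?K \<subseteq> {\<rho>}"
  proof
    fix x assume x: "x \<in> ?K"
    then have "x - \<rho> \<in> ks (Q P)" by (simp add: in_keys_iff lk_Dn)
    then obtain S where S: "S \<subseteq> P" "x - \<rho> = - (\<Sum>a\<in>S. a)" using Q_props[of P] by blast
    have "(\<Sum>a\<in>S. a) \<in> L" using S(1) by (intro L_sum R_L) (auto intro: P_R)
    then have xL: "x \<in> L"
    proof -
      assume "(\<Sum>a\<in>S. a) \<in> L"
      then have "\<rho> - (\<Sum>a\<in>S. a) \<in> L" using rho_L L_diff by blast
      moreover have "x = \<rho> - (\<Sum>a\<in>S. a)" using S(2) by (simp add: algebra_simps)
      ultimately show ?thesis by simp
    qed
    have dom: "x - \<rho> \<in> dominant R P" using sdom_minus_rho[OF xL] x by simp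
    have e: "(x - \<rho>) \<bullet> (x - \<rho>) = - (\<Sum>a\<in>S. (x - \<rho>) \<bullet> a)"
      by (subst (2) S(2)) (simp add: inner_sum_right)
    have s: "(\<Sum>a\<in>S. (x - \<rho>) \<bullet> a) \<ge> 0"
      using dom S(1) unfolding dominant_def by (intro sum_nonneg) auto
    have "(x - \<rho>) \<bullet> (x - \<rho>) \<le> 0" using e s by linarith
    then have "x - \<rho> = 0" by (metis antisym inner_ge_zero inner_eq_zero_iff)
    then show "x \<in> {\<rho>}" by simp
  qed
  with rK have K: "?K = {\<rho>}" by blast
  have "Dn = (\<Sum>x\<in>?K. of_int (lk Dn x) * alt x)" by (rule anti_decomp[OF Dn_anti])
  also have "\<dots> = alt \<rho>" unfolding K using Q_props[of P] by (simp add: lk_Dn)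
  finally show ?thesis .
qed

lemma alt_keys_L: assumes x: "x \<in> L" shows "ks (alt x) \<subseteq> L"
proof
  fix y assume "y \<in> ks (alt x)"
  then have "alternant R P x y \<noteq> 0" by (simp add: in_keys_iff lk_alt)
  then obtain w where "w \<in> W" "w x = y" using alternant_nz by blast
  then show "y \<in> L" using L_W x by blast
qed

lemma weyl_exists: assumes m: "\<mu> \<in> dominant R P"
  shows "\<exists>G. alt \<rho> * G = alt (\<mu> + \<rho>) \<and> ks G \<subseteq> L"
proof -
  have mL: "\<mu> + \<rho> \<in> L" using dom_plus_rho[OF m] by simp
  obtain G0 where G0: "alt (\<mu> + \<rho>) = Q P * G0" "ks G0 \<subseteq> L"
    using anti_divisible[OF alt_anti alt_keys_L[OF mL], of P] by blast
  have "alt \<rho> * (ee (- \<rho>) * G0) = (ee \<rho> * ee (- \<rho>)) * (Q P * G0)"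
    unfolding Dn_alt[symmetric] Dn_def by (simp only: ac_simps)
  also have "ee \<rho> * ee (- \<rho>) = 1" by (simp add: ee_mult)
  finally have e: "alt \<rho> * (ee (- \<rho>) * G0) = alt (\<mu> + \<rho>)" using G0(1) by simp
  have "ks (ee (- \<rho>) * G0) \<subseteq> L"
  proof
    fix y assume "y \<in> ks (ee (- \<rho>) * G0)"
    then obtain a b where ab: "a \<in> ks (ee (- \<rho>))" "b \<in> ks G0" "y = a + b" using keys_mult_grp by blast
    have "a = - \<rho>" using ab(1) by simp
    then show "y \<in> L" using ab G0(2) rho_L L_neg L_add by blast
  qed
  then show ?thesis using e by blast
qed

end

context RS begin

definition chp :: "'a \<Rightarrow> 'a fs" where "chp \<mu> = (THE G. alt \<rho> * G = alt (\<mu> + \<rho>))"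

lemma chp: assumes m: "\<mu> \<in> dominant R P"
  shows "alt \<rho> * chp \<mu> = alt (\<mu> + \<rho>)" "ks (chp \<mu>) \<subseteq> L"
proof -
  obtain G where G: "alt \<rho> * G = alt (\<mu> + \<rho>)" "ks G \<subseteq> L" using weyl_exists[OF m] by blast
  have "chp \<mu> = G" unfolding chp_def
    by (rule the_equality) (use G alt_rho_cancel in auto)
  then show "alt \<rho> * chp \<mu> = alt (\<mu> + \<rho>)" "ks (chp \<mu>) \<subseteq> L" using G by auto
qed

lemma alternant_lk: "alternant R P \<mu> = lk (alt \<mu>)"
  by (rule ext) (simp add: lk_alt)

lemma ch_chp: assumes m: "\<mu> \<in> dominant R P" shows "ch R P \<mu> = lk (chp \<mu>)"
  unfolding ch_def
proof (rule the_equality)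
  show "finite (fsupp (lk (chp \<mu>))) \<and> conv (lk (chp \<mu>)) (alternant R P \<rho>) = alternant R P (\<mu> + \<rho>)"
    using chp(1)[OF m] by (simp add: fsupp_lookup alternant_lk conv_lookup mult.commute)
next
  fix f assume f: "finite (fsupp f) \<and> conv f (alternant R P \<rho>) = alternant R P (\<mu> + \<rho>)"
  define F where "F = Abs_poly_mapping f"
  have lF: "lk F = f" unfolding F_def using f finite_fsupp_abs by blast
  have "lk (F * alt \<rho>) = lk (alt (\<mu> + \<rho>))"
    using f by (simp add: alternant_lk conv_lookup[symmetric] lF)
  then have "alt \<rho> * F = alt \<rho> * chp \<mu>" using chp(1)[OF m] by (simp add: mult.commute)
  then have "F = chp \<mu>" by (rule alt_rho_cancel)
  then show "f = lk (chp \<mu>)" using lF by simp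
qed

lemma weights_chp: "\<mu> \<in> dominant R P \<Longrightarrow> weights R P \<mu> = ks (chp \<mu>)"
  unfolding weights_def by (simp add: ch_chp fsupp_lookup)

lemma of_int_sign_sq: "w \<in> W \<Longrightarrow> (of_int (wsign P w) :: 'a fs) * of_int (wsign P w) = 1"
  using wsign_pm[of w] by (auto simp flip: of_int_mult)

lemma chp_invar: assumes m: "\<mu> \<in> dominant R P" shows "invar (chp \<mu>)"
  unfolding invar_def
proof
  fix w assume w: "w \<in> W"
  let ?s = "of_int (wsign P w) :: 'a fs"
  have "?s * (alt \<rho> * pre w (chp \<mu>)) = pre w (alt \<rho>) * pre w (chp \<mu>)"
    using alt_anti w unfolding anti_def by (simp add: ac_simps)
  also have "\<dots> = pre w (alt (\<mu> + \<rho>))" by (simp only: pre_mult[OF w, symmetric] chp(1)[OF m])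
  also have "\<dots> = ?s * (alt \<rho> * chp \<mu>)" using alt_anti w chp(1)[OF m] unfolding anti_def by simp
  finally have "?s * ?s * (alt \<rho> * pre w (chp \<mu>)) = ?s * ?s * (alt \<rho> * chp \<mu>)"
    by (simp add: mult.assoc)
  then have "alt \<rho> * pre w (chp \<mu>) = alt \<rho> * chp \<mu>" using of_int_sign_sq[OF w] by simp
  then show "pre w (chp \<mu>) = chp \<mu>" by (rule alt_rho_cancel)
qed

definition psi :: "nat \<Rightarrow> 'a fs \<Rightarrow> 'a fs" where
  "psi a F = Abs_poly_mapping (\<lambda>\<nu>. lk F ((1 / real a) *\<^sub>R \<nu>))"

lemma lk_psi: assumes a: "a > 0" shows "lk (psi a F) \<nu> = lk F ((1 / real a) *\<^sub>R \<nu>)"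
proof -
  have "{\<nu>. lk F ((1 / real a) *\<^sub>R \<nu>) \<noteq> 0} = (\<lambda>x. real a *\<^sub>R x) ` ks F"
  proof (rule set_eqI, rule iffI)
    fix \<nu> assume "\<nu> \<in> {\<nu>. lk F ((1 / real a) *\<^sub>R \<nu>) \<noteq> 0}"
    then have "(1 / real a) *\<^sub>R \<nu> \<in> ks F" by (simp add: in_keys_iff)
    moreover have "\<nu> = real a *\<^sub>R ((1 / real a) *\<^sub>R \<nu>)" using a by simp
    ultimately show "\<nu> \<in> (\<lambda>x. real a *\<^sub>R x) ` ks F" by blast
  next
    fix \<nu> assume "\<nu> \<in> (\<lambda>x. real a *\<^sub>R x) ` ks F"
    then obtain x where "x \<in> ks F" "\<nu> = real a *\<^sub>R x" by blast
    then show "\<nu> \<in> {\<nu>. lk F ((1 / real a) *\<^sub>R \<nu>) \<noteq> 0}" using a by (simp add: in_keys_iff)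
  qed
  then have "finite {\<nu>. lk F ((1 / real a) *\<^sub>R \<nu>) \<noteq> 0}" by simp
  then show ?thesis unfolding psi_def by simp
qed

lemma adams_psi: "a > 0 \<Longrightarrow> adams a (lk F) = lk (psi a F)"
  by (rule ext) (simp add: adams_def lk_psi)

lemma psi_invar: assumes a: "a > 0" and F: "invar F" shows "invar (psi a F)"
  unfolding invar_def
proof
  fix w assume w: "w \<in> W"
  show "pre w (psi a F) = psi a F"
  proof (rule poly_mapping_eqI)
    fix x
    have "lk (pre w (psi a F)) x = lk F (w ((1 / real a) *\<^sub>R x))"
      by (simp add: lk_pre[OF w] lk_psi[OF a] W_scale[OF w])
    also have "\<dots> = lk (pre w F) ((1 / real a) *\<^sub>R x)" by (simp add: lk_pre[OF w])
    also have "\<dots> = lk (psi a F) x" using F w unfolding invar_def by (simp add: lk_psi[OF a])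
    finally show "lk (pre w (psi a F)) x = lk (psi a F) x" .
  qed
qed

lemma psi_keys_L: assumes a: "a > 0" and F: "ks F \<subseteq> L" shows "ks (psi a F) \<subseteq> L"
proof
  fix \<nu> assume "\<nu> \<in> ks (psi a F)"
  then have "(1 / real a) *\<^sub>R \<nu> \<in> ks F" by (simp add: in_keys_iff lk_psi[OF a])
  then have "of_nat a *\<^sub>R ((1 / real a) *\<^sub>R \<nu>) \<in> L" using F L_nat by blast
  then show "\<nu> \<in> L" using a by simp
qed

section \<open>Plethysm multiplicities\<close>

context
  fixes lam :: 'a and a :: nat
  assumes lam: "lam \<in> dominant R P" and a: "a > 0"
begin

definition Fp :: "'a fs" where "Fp = psi a (chp lam) * alt \<rho>"

definition mm :: "'a \<Rightarrow> int" where
  "mm \<mu> = (if \<mu> \<in> dominant R P then lk Fp (\<mu> + \<rho>) else 0)"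

lemma Fp_anti: "anti Fp"
  unfolding Fp_def by (rule invar_anti_mult[OF psi_invar[OF a chp_invar[OF lam]] alt_anti])

lemma Fp_L: "ks Fp \<subseteq> L"
proof
  fix y assume "y \<in> ks Fp"
  then obtain p q where pq: "p \<in> ks (psi a (chp lam))" "q \<in> ks (alt \<rho>)" "y = p + q"
    unfolding Fp_def using keys_mult_grp by blast
  have "p \<in> L" using pq(1) psi_keys_L[OF a chp(2)[OF lam]] by blast
  moreover have "q \<in> L" using pq(2) alt_keys_L[OF rho_L] by blast
  ultimately show "y \<in> L" using pq(3) L_add by blast
qed

abbreviation KK where "KK \<equiv> {x\<in>ks Fp. sdom x}"

lemma KK_dom: "x \<in> KK \<Longrightarrow> x - \<rho> \<in> dominant R P"
  using sdom_minus_rho Fp_L by blast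

lemma psi_decomp: "psi a (chp lam) = (\<Sum>x\<in>KK. of_int (lk Fp x) * chp (x - \<rho>))"
proof -
  have "alt \<rho> * psi a (chp lam) = Fp" unfolding Fp_def by (simp add: mult.commute)
  also have "\<dots> = (\<Sum>x\<in>KK. of_int (lk Fp x) * alt x)" by (rule anti_decomp[OF Fp_anti])
  also have "\<dots> = (\<Sum>x\<in>KK. of_int (lk Fp x) * (alt \<rho> * chp (x - \<rho>)))"
  proof (rule sum.cong)
    fix x assume x: "x \<in> KK"
    have "alt \<rho> * chp (x - \<rho>) = alt (x - \<rho> + \<rho>)" by (rule chp(1)[OF KK_dom[OF x]])
    then show "of_int (lk Fp x) * alt x = of_int (lk Fp x) * (alt \<rho> * chp (x - \<rho>))" by simp
  qed simp
  also have "\<dots> = alt \<rho> * (\<Sum>x\<in>KK. of_int (lk Fp x) * chp (x - \<rho>))"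
    by (simp add: sum_distrib_left ac_simps)
  finally show ?thesis by (rule alt_rho_cancel)
qed

lemma fsupp_mm: "fsupp mm = (\<lambda>x. x - \<rho>) ` KK"
proof (rule set_eqI, rule iffI)
  fix \<mu> assume "\<mu> \<in> fsupp mm"
  then have m: "\<mu> \<in> dominant R P" "lk Fp (\<mu> + \<rho>) \<noteq> 0" unfolding fsupp_def mm_def by (auto split: if_splits)
  then have "\<mu> + \<rho> \<in> KK" using dom_plus_rho[OF m(1)] by (simp add: in_keys_iff)
  then show "\<mu> \<in> (\<lambda>x. x - \<rho>) ` KK" by (metis (no_types, lifting) add_diff_cancel image_eqI)
next
  fix \<mu> assume "\<mu> \<in> (\<lambda>x. x - \<rho>) ` KK"
  then obtain x where x: "x \<in> KK" "\<mu> = x - \<rho>" by blast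
  then show "\<mu> \<in> fsupp mm" using KK_dom[OF x(1)] unfolding fsupp_def mm_def by (simp add: in_keys_iff)
qed

lemma mm_ok: "finite (fsupp mm) \<and> fsupp mm \<subseteq> dominant R P
      \<and> adams a (ch R P lam) = (\<lambda>\<nu>. \<Sum>\<mu>\<in>fsupp mm. mm \<mu> * ch R P \<mu> \<nu>)"
proof (intro conjI)
  show "finite (fsupp mm)" unfolding fsupp_mm by simp
  show "fsupp mm \<subseteq> dominant R P" unfolding fsupp_mm using KK_dom by blast
  show "adams a (ch R P lam) = (\<lambda>\<nu>. \<Sum>\<mu>\<in>fsupp mm. mm \<mu> * ch R P \<mu> \<nu>)"
  proof (rule ext)
    fix \<nu>
    have inj: "inj_on (\<lambda>x. x - \<rho>) KK" by (auto intro: inj_onI)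
    have "(\<Sum>\<mu>\<in>fsupp mm. mm \<mu> * ch R P \<mu> \<nu>) = (\<Sum>x\<in>KK. mm (x - \<rho>) * ch R P (x - \<rho>) \<nu>)"
      unfolding fsupp_mm by (rule sum.reindex[OF inj, unfolded comp_def])
    also have "\<dots> = (\<Sum>x\<in>KK. lk Fp x * lk (chp (x - \<rho>)) \<nu>)"
      by (rule sum.cong) (auto simp: mm_def KK_dom ch_chp)
    also have "\<dots> = lk (psi a (chp lam)) \<nu>"
      by (subst psi_decomp) (simp add: lookup_sum lookup_of_int_mult)
    also have "\<dots> = adams a (ch R P lam) \<nu>" by (simp add: ch_chp[OF lam] adams_psi[OF a])
    finally show "adams a (ch R P lam) \<nu> = (\<Sum>\<mu>\<in>fsupp mm. mm \<mu> * ch R P \<mu> \<nu>)" by simp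
  qed
qed

lemma mm_unique: assumes m': "finite (fsupp m') \<and> fsupp m' \<subseteq> dominant R P
      \<and> adams a (ch R P lam) = (\<lambda>\<nu>. \<Sum>\<mu>\<in>fsupp m'. m' \<mu> * ch R P \<mu> \<nu>)"
  shows "m' = mm"
proof -
  have fin: "finite (fsupp m')" and sub: "fsupp m' \<subseteq> dominant R P"
    and eq: "adams a (ch R P lam) = (\<lambda>\<nu>. \<Sum>\<mu>\<in>fsupp m'. m' \<mu> * ch R P \<mu> \<nu>)" using m' by auto
  define M where "M = (\<Sum>\<mu>\<in>fsupp m'. of_int (m' \<mu>) * chp \<mu>)"
  have "psi a (chp lam) = M"
  proof (rule poly_mapping_eqI)
    fix \<nu>
    have "lk (psi a (chp lam)) \<nu> = (\<Sum>\<mu>\<in>fsupp m'. m' \<mu> * ch R P \<mu> \<nu>)"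
      using fun_cong[OF eq, of \<nu>] by (simp add: ch_chp[OF lam] adams_psi[OF a])
    also have "\<dots> = lk M \<nu>" unfolding M_def
      by (simp add: lookup_sum lookup_of_int_mult) (rule sum.cong, use sub ch_chp in auto)
    finally show "lk (psi a (chp lam)) \<nu> = lk M \<nu>" .
  qed
  then have "Fp = alt \<rho> * M" by (simp add: Fp_def mult.commute)
  also have "\<dots> = (\<Sum>\<mu>\<in>fsupp m'. of_int (m' \<mu>) * (alt \<rho> * chp \<mu>))"
    unfolding M_def by (simp add: sum_distrib_left ac_simps)
  also have "\<dots> = (\<Sum>\<mu>\<in>fsupp m'. of_int (m' \<mu>) * alt (\<mu> + \<rho>))"
    by (rule sum.cong) (use sub chp(1) in auto)
  finally have FpM: "Fp = (\<Sum>\<mu>\<in>fsupp m'. of_int (m' \<mu>) * alt (\<mu> + \<rho>))" .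
  show ?thesis
  proof (rule ext)
    fix \<nu>
    show "m' \<nu> = mm \<nu>"
    proof (cases "\<nu> \<in> dominant R P")
      case False
      then have "\<nu> \<notin> fsupp m'" using sub by blast
      then show ?thesis using False unfolding mm_def fsupp_def by simp
    next
      case True
      have nd: "sdom (\<nu> + \<rho>)" using dom_plus_rho[OF True] by simp
      have "lk Fp (\<nu> + \<rho>) = (\<Sum>\<mu>\<in>fsupp m'. m' \<mu> * alternant R P (\<mu> + \<rho>) (id (\<nu> + \<rho>)))"
        unfolding FpM by (simp add: lookup_sum lookup_of_int_mult lk_alt)
      also have "\<dots> = (\<Sum>\<mu>\<in>fsupp m'. if \<mu> = \<nu> then m' \<mu> else 0)"
      proof (rule sum.cong)
        fix \<mu> assume mu: "\<mu> \<in> fsupp m'"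
        have md: "sdom (\<mu> + \<rho>)" using dom_plus_rho sub mu by blast
        show "m' \<mu> * alternant R P (\<mu> + \<rho>) (id (\<nu> + \<rho>)) = (if \<mu> = \<nu> then m' \<mu> else 0)"
          using alternant_sdom[OF md nd weyl_group.id_in] wsign_id by auto
      qed simp
      also have "\<dots> = m' \<nu>" using fin by (simp add: fsupp_def)
      finally show ?thesis unfolding mm_def using True by simp
    qed
  qed
qed

lemma pleth_mm: "pleth_mult R P lam a = mm"
  unfolding pleth_mult_def
  by (rule the_equality, rule mm_ok, erule mm_unique)

lemma zero_in_S: assumes nz: "pleth_mult R P lam a 0 \<noteq> 0" shows "0 \<in> S_set R P lam a"
proof -
  have d0: "0 \<in> dominant R P" unfolding dominant_def using L_0 by simp
  have "lk Fp \<rho> \<noteq> 0" using nz d0 unfolding pleth_mm mm_def by simp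
  then have "(\<Sum>l\<in>ks (psi a (chp lam)). lk (psi a (chp lam)) l * lk (alt \<rho>) (\<rho> - l)) \<noteq> 0"
    unfolding Fp_def lookup_mult_grp .
  then obtain l where l0: "l \<in> ks (psi a (chp lam))" "lk (psi a (chp lam)) l * lk (alt \<rho>) (\<rho> - l) \<noteq> 0"
    by (rule sum.not_neutral_contains_not_neutral)
  then have l: "l \<in> ks (psi a (chp lam))" "lk (alt \<rho>) (\<rho> - l) \<noteq> 0" by auto
  obtain w where w: "w \<in> W" "w \<rho> = \<rho> - l" using alternant_nz l(2) by (auto simp: lk_alt)
  define \<pi> where "\<pi> = (1 / real a) *\<^sub>R l"
  have pw: "\<pi> \<in> weights R P lam" unfolding weights_chp[OF lam] \<pi>_def
    using l(1) by (simp add: in_keys_iff lk_psi[OF a])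
  have "w \<rho> - \<rho> + real a *\<^sub>R \<pi> = 0" unfolding \<pi>_def w(2) using a by simp
  then have "0 \<in> (\<lambda>\<pi>. w \<rho> - \<rho> + real a *\<^sub>R \<pi>) ` weights R P lam" using pw by (metis image_eqI)
  then show ?thesis unfolding S_set_def using w(1) d0 by blast
qed

end

end

lemma fstar_min:
  fixes P :: "'a::euclidean_space set" and a b :: nat
  assumes "0 < a" "a < b" and mu: "\<forall>\<alpha>\<in>P. \<mu> \<bullet> \<alpha> \<ge> 0" and nz: "\<mu> \<noteq> 0"
  shows "fstar P a b lam 0 < fstar P a b lam \<mu>"
proof -
  have r: "\<mu> \<bullet> rho P \<ge> 0" unfolding rho_def using mu by (simp add: inner_sum_right sum_nonneg)
  have q: "\<mu> \<bullet> \<mu> > 0" using nz by simp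
  have c1: "real b / (2 * real a) > 0" using assms by simp
  have c2: "real b / real a - 1 > 0" using assms by (simp add: field_simps)
  have "real b / (2 * real a) * (\<mu> \<bullet> \<mu>) > 0" by (rule mult_pos_pos[OF c1 q])
  moreover have "(real b / real a - 1) * (\<mu> \<bullet> rho P) \<ge> 0" using c2 r by simp
  ultimately show ?thesis unfolding fstar_def by simp
qed



theorem mainTheorem14:
  fixes R P :: "'a::euclidean_space set" and a b :: nat and lam :: 'a
  assumes "root_system R" and "irreducible_rs R" and "normalized_rs R"
    and "positive_system R P"
    and "coprime a b" and "0 < a" and "a < b"
    and "lam \<in> dominant R P"
    and "pleth_mult R P lam a 0 \<noteq> 0"
  shows "0 \<in> S_set R P lam a
    \<and> (\<forall>\<mu>\<in>S_set R P lam a. \<mu> \<noteq> 0 \<longrightarrow> fstar P a b lam 0 < fstar P a b lam \<mu>)"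
proof -
  obtain v where v: "\<forall>\<alpha>\<in>R. \<alpha> \<bullet> v \<noteq> 0" "P = {\<alpha>\<in>R. \<alpha> \<bullet> v > 0}"
    using assms(4) unfolding positive_system_def by blast
  interpret RS R P v
    by (unfold_locales) (use assms(1) v in auto)
  have z: "0 \<in> S_set R P lam a" by (rule zero_in_S[OF assms(8) assms(6) assms(9)])
  have "\<forall>\<mu>\<in>S_set R P lam a. \<mu> \<noteq> 0 \<longrightarrow> fstar P a b lam 0 < fstar P a b lam \<mu>"
  proof (intro ballI impI)
    fix \<mu> assume mu: "\<mu> \<in> S_set R P lam a" and nz: "\<mu> \<noteq> 0"
    then have "\<mu> \<in> dominant R P" unfolding S_set_def by blast
    then have "\<forall>\<alpha>\<in>P. \<mu> \<bullet> \<alpha> \<ge> 0" unfolding dominant_def by blast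
    then show "fstar P a b lam 0 < fstar P a b lam \<mu>" by (rule fstar_min[OF assms(6) assms(7) _ nz])
  qed
  with z show ?thesis by blast
qed

end
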